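(* For $i=1,\dots,n$ ($n\ge 2$) let $X_i$ be a finite set with $|X_i|=m_i$ and let $P_i$ be an irreducible stochastic matrix on $X_i$ in detailed balance with a strictly positive probability measure $\pi_i$, where $P_i$ is symmetric (i.e. $\pi_i$ is uniform) for every $i\ge 2$. Let $p^0_1,\dots,p^0_n>0$ sum to $1$ and let $$P=\sum_{i=1}^np^0_i\,(I_1\otimes\cdots\otimes I_{i-1}\otimes P_i\otimes J_{i+1}\otimes\cdots\otimes J_n)$$ (the nested product). For each $i$ let $L(X_i)=\bigoplus_{k=0}^{r_i}W^i_k$ be the eigenspace decomposition of $P_i$, with $W^i_k$ of eigenvalue $\lambda^i_k$, $\lambda^i_0=1$ and $W^i_0$ the constants. Then each of the following subspaces of $L(X_1\times\cdots\times X_n)\cong L(X_1)\otimes\cdots\otimes L(X_n)$ consists of eigenvectors of $P$ with the stated eigenvalue, and $L(X_1\times\cdots\times X_n)$ is their direct sum: (i) $L(X_1)\otimes\cdots\otimes L(X_{n-1})\otimes W^n_{k_n}$, $k_n=1,\dots,r_n$, with eigenvalue $p^0_n\lambda^n_{k_n}$ and dimension $m_1\cdots m_{n-1}\dim W^n_{k_n}$; (ii) $L(X_1)\otimes\cdots\otimes L(X_j)\otimes W^{j+1}_{k_{j+1}}\otimes W^{j+2}_0\otimes\cdots\otimes W^n_0$, for $j=1,\dots,n-2$ and $k_{j+1}=1,\dots,r_{j+1}$, with eigenvalue $p^0_{j+1}\lambda^{j+1}_{k_{j+1}}+p^0_{j+2}+\cdots+p^0_n$ and dimension $m_1\cdots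 m_j\dim W^{j+1}_{k_{j+1}}$; (iii) $W^1_{k_1}\otimes W^2_0\otimes\cdots\otimes W^n_0$, for $k_1=0,1,\dots,r_1$, with eigenvalue $p^0_1\lambda^1_{k_1}+p^0_2+\cdots+p^0_n$ and dimension $\dim W^1_{k_1}$.
   Context: $I_i$ is the identity matrix on $X_i$ and $J_i$ the $m_i\times m_i$ matrix with all entries $1/m_i$; explicitly $p(x,y)=\sum_{i=1}^np^0_i(\prod_{j<i}\delta(x_j,y_j))p_i(x_i,y_i)/\prod_{j>i}m_j$. Operators act on functions by $(Pf)(x)=\sum_yp(x,y)f(y)$; $(f_1\otimes\cdots\otimes f_n)(x)=\prod_if_i(x_i)$. Detailed balance: $\pi_i(x)p_i(x,y)=\pi_i(y)p_i(y,x)$. *)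

theory Defs
  imports Complex_Main "HOL-Library.FuncSet" "HOL-Library.Function_Algebras"
begin

definition fscale :: "real \<Rightarrow> ('b \<Rightarrow> real) \<Rightarrow> ('b \<Rightarrow> real)" where
  "fscale c f = (\<lambda>x. c * f x)"

text \<open>L(A): real functions on the finite set A (extended by 0 outside A).\<close>
definition Lfun :: "'b set \<Rightarrow> ('b \<Rightarrow> real) set" where
  "Lfun A = {f. \<forall>x. x \<notin> A \<longrightarrow> f x = 0}"

definition apply_kernel :: "'b set \<Rightarrow> ('b \<Rightarrow> 'b \<Rightarrow> real) \<Rightarrow> ('b \<Rightarrow> real) \<Rightarrow> ('b \<Rightarrow> real)" where
  "apply_kernel A p f = (\<lambda>x. if x \<in> A then (\<Sum>y\<in>A. p x y * f y) else 0)"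

fun kpow :: "'b set \<Rightarrow> ('b \<Rightarrow> 'b \<Rightarrow> real) \<Rightarrow> nat \<Rightarrow> 'b \<Rightarrow> 'b \<Rightarrow> real" where
  "kpow A p 0 x y = (if x = y then 1 else 0)"
| "kpow A p (Suc k) x y = (\<Sum>z\<in>A. p x z * kpow A p k z y)"

definition stochastic :: "'b set \<Rightarrow> ('b \<Rightarrow> 'b \<Rightarrow> real) \<Rightarrow> bool" where
  "stochastic A p \<longleftrightarrow> (\<forall>x\<in>A. \<forall>y\<in>A. p x y \<ge> 0) \<and> (\<forall>x\<in>A. (\<Sum>y\<in>A. p x y) = 1)"

definition irreducible_kernel :: "'b set \<Rightarrow> ('b \<Rightarrow> 'b \<Rightarrow> real) \<Rightarrow> bool" where
  "irreducible_kernel A p \<longleftrightarrow> (\<forall>x\<in>A. \<forall>y\<in>A. \<exists>k. kpow A p k x y > 0)"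

definition positive_prob :: "'b set \<Rightarrow> ('b \<Rightarrow> real) \<Rightarrow> bool" where
  "positive_prob A \<pi> \<longleftrightarrow> (\<forall>x\<in>A. \<pi> x > 0) \<and> (\<Sum>x\<in>A. \<pi> x) = 1"

definition detailed_balance :: "'b set \<Rightarrow> ('b \<Rightarrow> real) \<Rightarrow> ('b \<Rightarrow> 'b \<Rightarrow> real) \<Rightarrow> bool" where
  "detailed_balance A \<pi> p \<longleftrightarrow> (\<forall>x\<in>A. \<forall>y\<in>A. \<pi> x * p x y = \<pi> y * p y x)"

definition eigvals :: "'b set \<Rightarrow> ('b \<Rightarrow> 'b \<Rightarrow> real) \<Rightarrow> real set" where
  "eigvals A p = {lam. \<exists>f\<in>Lfun A. f \<noteq> (\<lambda>_. 0) \<and> apply_kernel A p f = fscale lam f}"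

definition eigspace :: "'b set \<Rightarrow> ('b \<Rightarrow> 'b \<Rightarrow> real) \<Rightarrow> real \<Rightarrow> ('b \<Rightarrow> real) set" where
  "eigspace A p lam = {f\<in>Lfun A. apply_kernel A p f = fscale lam f}"

abbreviation prodX :: "nat \<Rightarrow> (nat \<Rightarrow> 'a set) \<Rightarrow> (nat \<Rightarrow> 'a) set" where
  "prodX n X \<equiv> Pi\<^sub>E {1..n} X"

definition nested_kernel :: "nat \<Rightarrow> (nat \<Rightarrow> 'a set) \<Rightarrow> (nat \<Rightarrow> real) \<Rightarrow> (nat \<Rightarrow> 'a \<Rightarrow> 'a \<Rightarrow> real)
    \<Rightarrow> (nat \<Rightarrow> 'a) \<Rightarrow> (nat \<Rightarrow> 'a) \<Rightarrow> real" where
  "nested_kernel n X p0 p x y =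
     (\<Sum>i\<in>{1..n}. p0 i * (\<Prod>j\<in>{1..<i}. if x j = y j then 1 else 0) * p i (x i) (y i)
        / (\<Prod>j\<in>{i<..n}. real (card (X j))))"

text \<open>Tensor product V_1 (x) ... (x) V_n of subspaces V_i of L(X_i), as the subspace of
  L(X_1 x ... x X_n) spanned by the elementary tensors f_1 (x) ... (x) f_n.\<close>
definition tensor_sub :: "nat \<Rightarrow> (nat \<Rightarrow> 'a set) \<Rightarrow> (nat \<Rightarrow> ('a \<Rightarrow> real) set) \<Rightarrow> ((nat \<Rightarrow> 'a) \<Rightarrow> real) set" where
  "tensor_sub n X V = module.span fscale
     {(\<lambda>x. if x \<in> prodX n X then (\<Prod>i\<in>{1..n}. f i (x i)) else 0) | f. \<forall>i\<in>{1..n}. f i \<in> V i}"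

text \<open>L(X_1) (x) ... (x) L(X_{i-1}) (x) W^i(lam) (x) W^{i+1}_0 (x) ... (x) W^n_0,
  where W^j_0 is the eigenspace of P_j for the eigenvalue 1.\<close>
definition block_sub :: "nat \<Rightarrow> (nat \<Rightarrow> 'a set) \<Rightarrow> (nat \<Rightarrow> 'a \<Rightarrow> 'a \<Rightarrow> real) \<Rightarrow> nat \<Rightarrow> real
    \<Rightarrow> ((nat \<Rightarrow> 'a) \<Rightarrow> real) set" where
  "block_sub n X p i lam = tensor_sub n X (\<lambda>j. if j < i then Lfun (X j)
      else if j = i then eigspace (X i) (p i) lam else eigspace (X j) (p j) 1)"

definition is_direct_sum :: "('b \<Rightarrow> real) set \<Rightarrow> 'k set \<Rightarrow> ('k \<Rightarrow> ('b \<Rightarrow> real) set) \<Rightarrow> bool" where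
  "is_direct_sum U I V \<longleftrightarrow> finite I \<and> (\<forall>k\<in>I. V k \<subseteq> U) \<and>
     (\<forall>f\<in>U. \<exists>!g. (\<forall>k\<in>I. g k \<in> V k) \<and> (\<forall>k. k \<notin> I \<longrightarrow> g k = (\<lambda>_. 0)) \<and>
                  f = (\<lambda>x. \<Sum>k\<in>I. g k x))"

end

theory Submission
  imports Defs "HOL-Analysis.Analysis"
begin

lemma vs_fscale: "vector_space (fscale :: real \<Rightarrow> ('b \<Rightarrow> real) \<Rightarrow> ('b \<Rightarrow> real))"
  by unfold_locales (auto simp: fscale_def fun_eq_iff algebra_simps)

interpretation fs: vector_space "fscale :: real \<Rightarrow> ('b \<Rightarrow> real) \<Rightarrow> ('b \<Rightarrow> real)"
  by (rule vs_fscale)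

lemma sum_fun_apply: "(\<Sum>i\<in>S. f i) x = (\<Sum>i\<in>S. f i x)"
  by (induction S rule: infinite_finite_induct) auto

lemma fscale_apply[simp]: "fscale c f x = c * f x"
  by (simp add: fscale_def)

lemma Lfun_subspace: "fs.subspace (Lfun A)"
  by (auto simp: fs.subspace_def Lfun_def)

lemma Lfun_iff: "f \<in> Lfun A \<longleftrightarrow> (\<forall>x. x \<notin> A \<longrightarrow> f x = 0)"
  by (simp add: Lfun_def)

definition ipw :: "'b set \<Rightarrow> ('b \<Rightarrow> real) \<Rightarrow> ('b \<Rightarrow> real) \<Rightarrow> ('b \<Rightarrow> real) \<Rightarrow> real" where
  "ipw A w f g = (\<Sum>x\<in>A. w x * f x * g x)"

lemma ipw_sym: "ipw A w f g = ipw A w g f"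
  by (simp add: ipw_def mult_ac)
lemma ipw_add_left: "ipw A w (f + g) h = ipw A w f h + ipw A w g h"
  by (simp add: ipw_def algebra_simps sum.distrib)
lemma ipw_diff_left: "ipw A w (f - g) h = ipw A w f h - ipw A w g h"
  by (simp add: ipw_def algebra_simps sum_subtractf)
lemma ipw_scale_left: "ipw A w (fscale c f) h = c * ipw A w f h"
  by (simp add: ipw_def algebra_simps sum_distrib_left)
lemma ipw_zero_left[simp]: "ipw A w 0 h = 0"
  by (simp add: ipw_def)
lemma ipw_add_right: "ipw A w h (f + g) = ipw A w h f + ipw A w h g"
  by (simp add: ipw_def algebra_simps sum.distrib)
lemma ipw_diff_right: "ipw A w h (f - g) = ipw A w h f - ipw A w h g"
  by (simp add: ipw_def algebra_simps sum_subtractf)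
lemma ipw_scale_right: "ipw A w h (fscale c f) = c * ipw A w h f"
  by (simp add: ipw_def algebra_simps sum_distrib_left)

lemma ipw_nonneg: "\<forall>x\<in>A. w x > 0 \<Longrightarrow> ipw A w f f \<ge> 0"
  unfolding ipw_def by (intro sum_nonneg) (metis less_eq_real_def mult_nonneg_nonneg mult.assoc zero_le_square)

lemma ipw_pos:
  assumes "finite A" "\<forall>x\<in>A. w x > 0" "f \<in> Lfun A" "f \<noteq> 0"
  shows "ipw A w f f > 0"
proof -
  obtain x where x: "f x \<noteq> 0" using assms(4) by (auto simp: fun_eq_iff)
  then have xA: "x \<in> A" using assms(3) by (auto simp: Lfun_def)
  have p: "0 < w x * f x * f x"
    using x xA assms(2) mult_pos_pos not_real_square_gt_zero by (metis mult.assoc)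
  have nn: "\<forall>i\<in>A. 0 \<le> w i * f i * f i"
    using assms(2) by (metis less_eq_real_def mult_nonneg_nonneg mult.assoc zero_le_square)
  show ?thesis unfolding ipw_def
    using sum_pos2[OF assms(1) xA, of "\<lambda>i. w i * f i * f i"] p nn by blast
qed

lemma ipw_eq0:
  assumes "finite A" "\<forall>x\<in>A. w x > 0" "f \<in> Lfun A" "ipw A w f f = 0"
  shows "f = 0"
  using ipw_pos[OF assms(1-3)] assms(4) by force

lemma ipw_span_orth:
  assumes "\<forall>a\<in>S. ipw A w a g = 0" "v \<in> fs.span S"
  shows "ipw A w v g = 0"
  using assms(2)
proof (induction rule: fs.span_induct_alt)
  case base then show ?case by (simp add: ipw_def)
next
  case (step c x y)
  have e: "ipw A w (fscale c x + y) g = c * ipw A w x g + ipw A w y g"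
    unfolding ipw_def by (simp add: algebra_simps sum.distrib sum_distrib_left)
  show ?case using step assms(1) by (simp only: e)
qed

lemma orth_indep:
  assumes "finite A" "\<forall>x\<in>A. w x > 0" "S \<subseteq> Lfun A" "0 \<notin> S"
    "\<forall>a\<in>S. \<forall>b\<in>S. a \<noteq> b \<longrightarrow> ipw A w a b = 0"
  shows "fs.independent S"
proof
  assume "fs.dependent S"
  then obtain a where a: "a \<in> S" "a \<in> fs.span (S - {a})" unfolding fs.dependent_def by blast
  have "ipw A w a a = 0"
    by (rule ipw_span_orth[OF _ a(2)]) (use assms(5) a(1) in auto)
  then have "a = 0" using ipw_eq0[OF assms(1,2)] a(1) assms(3) by auto
  then show False using a(1) assms(4) by auto
qed

definition delta :: "'b \<Rightarrow> 'b \<Rightarrow> real" where "delta y = (\<lambda>x. if x = y then 1 else 0)"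

lemma Lfun_span_delta:
  assumes "finite A"
  shows "Lfun A \<subseteq> fs.span (delta ` A)"
proof
  fix f assume f: "f \<in> Lfun A"
  have "f = (\<Sum>y\<in>A. fscale (f y) (delta y))"
  proof
    fix x
    show "f x = (\<Sum>y\<in>A. fscale (f y) (delta y)) x"
      using f assms by (cases "x \<in> A") (auto simp: sum_fun_apply delta_def Lfun_def
          if_distrib[of "\<lambda>t. f _ * t"] sum.delta cong: if_cong)
  qed
  also have "\<dots> \<in> fs.span (delta ` A)"
    by (intro fs.span_sum fs.span_scale fs.span_base) auto
  finally show "f \<in> fs.span (delta ` A)" .
qed

lemma card_delta: "card (delta ` A) = card A"
  by (rule card_image) (auto simp: inj_on_def delta_def fun_eq_iff split: if_splits)

lemma indep_card_spans:
  assumes fin: "finite A" and SA: "S \<subseteq> Lfun A" and ind: "fs.independent S"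
    and card: "card S = card A" and finS: "finite S"
  shows "Lfun A \<subseteq> fs.span S"
proof
  fix a assume aV: "a \<in> Lfun A"
  show "a \<in> fs.span S"
  proof (rule ccontr)
    assume aB: "a \<notin> fs.span S"
    then have iaB: "fs.independent (insert a S)"
      using ind by (simp add: fs.independent_insert)
    have "insert a S \<subseteq> fs.span (delta ` A)" using aV SA Lfun_span_delta[OF fin] by blast
    from fs.independent_span_bound[OF _ iaB this] fin
    have "card (insert a S) \<le> card A" by (simp add: card_delta)
    moreover have "a \<notin> S" using aB fs.span_base by blast
    ultimately show False using card finS by simp
  qed
qed

lemma K_lfun: "apply_kernel A p f \<in> Lfun A" by (simp add: apply_kernel_def Lfun_def)
lemma K_add: "apply_kernel A p (f + g) = apply_kernel A p f + apply_kernel A p g"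
  by (auto simp: apply_kernel_def fun_eq_iff algebra_simps sum.distrib)
lemma K_diff: "apply_kernel A p (f - g) = apply_kernel A p f - apply_kernel A p g"
  by (auto simp: apply_kernel_def fun_eq_iff algebra_simps sum_subtractf)
lemma K_scale: "apply_kernel A p (fscale c f) = fscale c (apply_kernel A p f)"
  by (auto simp: apply_kernel_def fun_eq_iff algebra_simps sum_distrib_left)
lemma K_zero: "apply_kernel A p 0 = 0"
  by (auto simp: apply_kernel_def fun_eq_iff)
lemma K_in: "x \<in> A \<Longrightarrow> apply_kernel A p f x = (\<Sum>y\<in>A. p x y * f y)"
  by (simp add: apply_kernel_def)

lemma ipw_K: "ipw A w (apply_kernel A p f) g = (\<Sum>x\<in>A. \<Sum>y\<in>A. (w x * p x y) * f y * g x)"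
  unfolding ipw_def by (intro sum.cong refl) (simp add: K_in sum_distrib_left sum_distrib_right mult_ac)

lemma K_selfadj:
  assumes "\<forall>x\<in>A. \<forall>y\<in>A. w x * p x y = w y * p y x"
  shows "ipw A w (apply_kernel A p f) g = ipw A w f (apply_kernel A p g)"
proof -
  have "ipw A w (apply_kernel A p f) g = (\<Sum>x\<in>A. \<Sum>y\<in>A. (w y * p y x) * f y * g x)"
    unfolding ipw_K using assms by (intro sum.cong refl) simp
  also have "\<dots> = (\<Sum>y\<in>A. \<Sum>x\<in>A. (w y * p y x) * g x * f y)"
    by (subst sum.swap) (simp add: mult_ac)
  also have "\<dots> = ipw A w (apply_kernel A p g) f" unfolding ipw_K ..
  finally show ?thesis by (simp add: ipw_sym)
qed

lemma quad_zero:
  fixes a c :: real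
  assumes "\<forall>t. t * a + t^2 * c \<le> 0"
  shows "a = 0"
proof (rule ccontr)
  assume a: "a \<noteq> 0"
  define t where "t = a / (\<bar>c\<bar> + 1)"
  have d: "\<bar>c\<bar> + 1 > 0" by simp
  have h1: "t * a - t^2 * \<bar>c\<bar> \<le> t * a + t^2 * c"
    by (smt (verit) abs_ge_minus_self mult_left_mono zero_le_power2 mult_minus_right)
  have g: "(a/k)*a - (a/k)^2*(k-1) = a^2/k^2" if "k > 0" for k :: real
    using that by (simp add: field_simps power2_eq_square)
  have h2: "t * a - t^2 * \<bar>c\<bar> = a^2 / (\<bar>c\<bar> + 1)^2"
    using g[OF d] unfolding t_def by simp
  have h3: "a^2 / (\<bar>c\<bar> + 1)^2 > 0" using a by simp
  show False using assms h1 h2 h3 by (smt (verit))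
qed

lemma coord_cont[continuous_intros]: "continuous_on S (\<lambda>f::'b \<Rightarrow> real. f x)"
  by (rule continuous_on_subset[OF continuous_on_product_coordinates]) simp

lemma bound_aux:
  fixes w y :: real
  assumes "w > 0" "w * y^2 \<le> 1"
  shows "\<bar>y\<bar> \<le> 1 + 1 / w"
proof (cases "\<bar>y\<bar> \<le> 1")
  case True then show ?thesis using assms by (simp add: add_increasing2)
next
  case False
  then have "\<bar>y\<bar> * 1 \<le> \<bar>y\<bar> * \<bar>y\<bar>" by (intro mult_left_mono) auto
  then have "\<bar>y\<bar> \<le> y^2" by (simp add: power2_eq_square)
  then have "w * \<bar>y\<bar> \<le> w * y^2" using assms by (intro mult_left_mono) auto
  then have "w * \<bar>y\<bar> \<le> 1" using assms by linarith
  then have "\<bar>y\<bar> \<le> 1 / w" using assms by (simp add: field_simps)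
  then show ?thesis by simp
qed

lemma ipw_scale_both: "ipw A w (fscale a f) (fscale a f) = a^2 * ipw A w f f"
  by (simp add: ipw_scale_left ipw_scale_right power2_eq_square)

lemma ipw_term_le:
  assumes "finite A" "\<forall>x\<in>A. w x > 0" "x \<in> A"
  shows "w x * f x * f x \<le> ipw A w f f"
proof -
  have nn: "\<forall>i\<in>A. 0 \<le> w i * f i * f i"
    using assms(2) by (metis less_eq_real_def mult_nonneg_nonneg mult.assoc zero_le_square)
  show ?thesis unfolding ipw_def using member_le_sum[of x A "\<lambda>i. w i * f i * f i"] nn assms(1,3) by blast
qed

lemma eig_exists:
  fixes A :: "'b set" and w :: "'b \<Rightarrow> real"
  assumes fin: "finite A" and wpos: "\<forall>x\<in>A. w x > 0"
    and sa: "\<forall>x\<in>A. \<forall>y\<in>A. w x * p x y = w y * p y x"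
    and Sev: "\<forall>s\<in>S. apply_kernel A p s = fscale (ev s) s"
    and u0: "u0 \<in> Lfun A" "u0 \<noteq> 0" "\<forall>s\<in>S. ipw A w u0 s = 0"
  shows "\<exists>u. u \<in> Lfun A \<and> u \<noteq> 0 \<and> (\<forall>s\<in>S. ipw A w u s = 0) \<and> (\<exists>\<mu>. apply_kernel A p u = fscale \<mu> u)"
proof -
  let ?K = "apply_kernel A p"
  let ?ip = "ipw A w"
  define U where "U = {f \<in> Lfun A. \<forall>s\<in>S. ?ip f s = 0}"
  define R where "R f = ?ip (?K f) f" for f
  define box where "box = PiE UNIV (\<lambda>x. if x \<in> A then {-(1 + 1/w x)..1 + 1/w x} else {0::real})"
  define C where "C = box \<inter> ({f. ?ip f f = 1} \<inter> (\<Inter>s\<in>S. {f. ?ip f s = 0}))"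
  have Usub: "fs.subspace U"
    unfolding fs.subspace_def U_def
    using Lfun_subspace[of A, unfolded fs.subspace_def]
    by (simp add: ipw_add_left ipw_scale_left del: plus_fun_apply fscale_apply)
  have KU: "?K f \<in> U" if "f \<in> U" for f
  proof -
    have "?ip (?K f) s = 0" if "s \<in> S" for s
      using that \<open>f\<in>U\<close> Sev K_selfadj[OF sa, of f s] by (simp add: U_def ipw_scale_right)
    then show ?thesis by (simp add: U_def K_lfun)
  qed
  have cont_ip: "continuous_on X (\<lambda>f. ?ip f g)" for X g unfolding ipw_def by (intro continuous_intros)
  have cont_ip2: "continuous_on X (\<lambda>f. ?ip f f)" for X unfolding ipw_def by (intro continuous_intros)
  have Req: "R f = (\<Sum>x\<in>A. \<Sum>y\<in>A. (w x * p x y) * f y * f x)" for f unfolding R_def ipw_K ..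
  have contR: "continuous_on C R" unfolding Req by (intro continuous_intros)
  have compact_box: "compact box"
  proof -
    have "compactin (product_topology (\<lambda>i. euclidean) UNIV) box"
      unfolding box_def compactin_PiE by auto
    then show ?thesis by (simp add: euclidean_product_topology)
  qed
  have closedC: "closed ({f. ?ip f f = 1} \<inter> (\<Inter>s\<in>S. {f. ?ip f s = 0}))"
    by (intro closed_Int closed_INT ballI closed_Collect_eq cont_ip cont_ip2 continuous_on_const)
  have compC: "compact C" unfolding C_def using compact_box closedC by blast
  have boxI: "f \<in> box" if "f \<in> Lfun A" "?ip f f = 1" for f
  proof -
    have "\<bar>f x\<bar> \<le> 1 + 1 / w x" if "x \<in> A" for x
    proof (rule bound_aux)
      show "w x > 0" using wpos that by auto
      have "w x * f x * f x \<le> ?ip f f" by (rule ipw_term_le[OF fin wpos that])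
      then show "w x * (f x)^2 \<le> 1" using \<open>?ip f f = 1\<close> by (simp add: power2_eq_square mult.assoc)
    qed
    then have "\<forall>x\<in>A. -(1 + 1/w x) \<le> f x \<and> f x \<le> 1 + 1 / w x"
      by (metis abs_le_iff minus_le_iff)
    then show ?thesis using \<open>f \<in> Lfun A\<close> unfolding box_def Lfun_def PiE_iff by auto
  qed
  have boxL: "f \<in> Lfun A" if "f \<in> box" for f
    using that unfolding box_def Lfun_def PiE_iff by (auto split: if_splits)
  have CU: "C = {f \<in> U. ?ip f f = 1}"
    unfolding C_def U_def using boxI boxL by auto
  have Rscale: "R (fscale a f) = a^2 * R f" for a f
    by (simp add: R_def K_scale ipw_scale_left ipw_scale_right power2_eq_square)
  have ip0: "?ip u0 u0 > 0" using ipw_pos[OF fin wpos u0(1,2)] .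
  define u1 where "u1 = fscale (1 / sqrt (?ip u0 u0)) u0"
  have "u1 \<in> C"
  proof -
    have "u0 \<in> U" using u0 by (simp add: U_def)
    then have "u1 \<in> U" unfolding u1_def using Usub by (simp add: fs.subspace_scale del: fscale_apply)
    moreover have "?ip u1 u1 = 1" unfolding u1_def ipw_scale_both using ip0
      by (simp add: power_divide)
    ultimately show ?thesis by (simp add: CU)
  qed
  then have Cne: "C \<noteq> {}" by auto
  obtain u where uC: "u \<in> C" and umax: "\<forall>g\<in>C. R g \<le> R u"
    using continuous_attains_sup[OF compC Cne contR] by blast
  define \<mu> where "\<mu> = R u"
  have uU: "u \<in> U" and uu: "?ip u u = 1" using uC CU by auto
  have le: "R g \<le> \<mu> * ?ip g g" if "g \<in> U" for g
  proof (cases "g = 0")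
    case True then show ?thesis by (simp add: R_def K_zero)
  next
    case False
    have gL: "g \<in> Lfun A" using that by (simp add: U_def)
    define c where "c = ?ip g g"
    have c: "c > 0" unfolding c_def using ipw_pos[OF fin wpos gL False] .
    define g' where "g' = fscale (1 / sqrt c) g"
    have "g' \<in> U" unfolding g'_def using Usub that by (simp add: fs.subspace_scale del: fscale_apply)
    moreover have "?ip g' g' = 1" unfolding g'_def ipw_scale_both using c
      by (simp add: power_divide c_def)
    ultimately have "g' \<in> C" by (simp add: CU)
    then have "R g' \<le> \<mu>" using umax \<mu>_def by auto
    moreover have "R g' = R g / c" unfolding g'_def Rscale using c by (simp add: power_divide)
    ultimately have "R g / c \<le> \<mu>" by simp
    then show ?thesis using c by (simp add: c_def[symmetric] field_simps)
  qed
  define v where "v = ?K u - fscale \<mu> u"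
  have vU: "v \<in> U" unfolding v_def
    using Usub KU[OF uU] uU by (simp add: fs.subspace_diff fs.subspace_scale del: fscale_apply)
  have vu: "?ip v u = 0" unfolding v_def
    by (simp add: ipw_diff_left ipw_scale_left uu \<mu>_def R_def del: fscale_apply)
  define a where "a = ?ip v v"
  define b where "b = R v"
  have Kuv: "?ip (?K u) v = a"
  proof -
    have "?K u = v + fscale \<mu> u" unfolding v_def by simp
    then show ?thesis by (simp add: ipw_add_left ipw_scale_left a_def ipw_sym[of A w u v] vu
      del: fscale_apply plus_fun_apply)
  qed
  have Kvu: "?ip (?K v) u = a" using K_selfadj[OF sa, of v u] Kuv ipw_sym by metis
  have "\<forall>t. t * (2*a) + t^2 * (b - \<mu> * a) \<le> 0"
  proof
    fix t :: real
    define g where "g = u + fscale t v"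
    have "g \<in> U" unfolding g_def using Usub uU vU
      by (simp add: fs.subspace_add fs.subspace_scale del: fscale_apply plus_fun_apply)
    then have "R g \<le> \<mu> * ?ip g g" by (rule le)
    moreover have "?ip g g = 1 + t^2 * a"
      unfolding g_def
      by (simp only: ipw_add_left ipw_add_right ipw_scale_left ipw_scale_right uu vu)
        (simp add: ipw_sym[of A w u v] vu a_def power2_eq_square)
    moreover have "R g = \<mu> + 2 * t * a + t^2 * b"
      unfolding g_def R_def
      by (simp only: K_add K_scale ipw_add_left ipw_add_right ipw_scale_left ipw_scale_right Kuv Kvu)
        (simp add: \<mu>_def R_def b_def power2_eq_square algebra_simps)
    ultimately show "t * (2*a) + t^2 * (b - \<mu> * a) \<le> 0" by (simp add: algebra_simps)
  qed
  then have "2 * a = 0" by (rule quad_zero)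
  then have "v = 0" using ipw_eq0[OF fin wpos] vU by (simp add: U_def a_def)
  then have "?K u = fscale \<mu> u" unfolding v_def by simp
  moreover have "u \<noteq> 0" using uu by (auto simp: ipw_def)
  ultimately show ?thesis using uU by (auto simp: U_def)
qed

lemma ipw_sum_left: "ipw A w (\<Sum>b\<in>B. F b) c = (\<Sum>b\<in>B. ipw A w (F b) c)"
proof -
  have "ipw A w (\<Sum>b\<in>B. F b) c = (\<Sum>x\<in>A. \<Sum>b\<in>B. w x * F b x * c x)"
    unfolding ipw_def sum_fun_apply by (simp add: sum_distrib_left sum_distrib_right)
  also have "\<dots> = (\<Sum>b\<in>B. ipw A w (F b) c)" unfolding ipw_def by (rule sum.swap)
  finally show ?thesis .
qed

lemma coef_orth:
  assumes "finite B" "c \<in> B" "\<forall>a\<in>B. \<forall>b\<in>B. a \<noteq> b \<longrightarrow> ipw A w a b = 0"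
  shows "ipw A w (\<Sum>b\<in>B. fscale (\<alpha> b) b) c = \<alpha> c * ipw A w c c"
proof -
  have "ipw A w (\<Sum>b\<in>B. fscale (\<alpha> b) b) c = (\<Sum>b\<in>B. \<alpha> b * ipw A w b c)"
    by (simp add: ipw_sum_left ipw_scale_left del: fscale_apply)
  also have "\<dots> = \<alpha> c * ipw A w c c"
    using assms by (subst sum.remove[of _ c]) (auto intro!: sum.neutral)
  finally show ?thesis .
qed

lemma orth_expand:
  assumes fin: "finite A" and wpos: "\<forall>x\<in>A. w x > 0" and BL: "B \<subseteq> Lfun A" and finB: "finite B"
    and orth: "\<forall>a\<in>B. \<forall>b\<in>B. a \<noteq> b \<longrightarrow> ipw A w a b = 0"
    and sp: "Lfun A \<subseteq> fs.span B" and f: "f \<in> Lfun A"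
  shows "f = (\<Sum>b\<in>B. fscale (ipw A w f b / ipw A w b b) b)"
proof -
  define h where "h = f - (\<Sum>b\<in>B. fscale (ipw A w f b / ipw A w b b) b)"
  have fs': "f \<in> fs.span B" using sp f by auto
  have hs: "h \<in> fs.span B" unfolding h_def
    by (intro fs.span_diff[OF fs'] fs.span_sum fs.span_scale fs.span_base)
  have hL: "h \<in> Lfun A" unfolding h_def using Lfun_subspace BL f
    by (intro fs.subspace_diff fs.subspace_sum fs.subspace_scale) auto
  have "ipw A w c h = 0" if "c \<in> B" for c
  proof -
    have "ipw A w c c \<noteq> 0 \<or> c = 0 \<or> True" by simp
    have "ipw A w h c = ipw A w f c - (ipw A w f c / ipw A w c c) * ipw A w c c"
      unfolding h_def ipw_diff_left coef_orth[OF finB that orth] ..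
    also have "\<dots> = 0"
    proof (cases "ipw A w c c = 0")
      case True
      then have "c = 0" using ipw_eq0[OF fin wpos] BL that by auto
      then show ?thesis by (simp add: ipw_def)
    qed simp
    finally show ?thesis by (simp add: ipw_sym)
  qed
  then have "ipw A w h h = 0" using ipw_span_orth[OF _ hs, of A w h] by auto
  then have "h = 0" using ipw_eq0[OF fin wpos hL] by simp
  then show ?thesis unfolding h_def by simp
qed

lemma eigenbasis:
  fixes A :: "'b set" and w :: "'b \<Rightarrow> real"
  assumes fin: "finite A" and wpos: "\<forall>x\<in>A. w x > 0"
    and sa: "\<forall>x\<in>A. \<forall>y\<in>A. w x * p x y = w y * p y x"
  shows "\<exists>B ev. B \<subseteq> Lfun A \<and> finite B \<and> card B = card A \<and> 0 \<notin> B \<and>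
           (\<forall>a\<in>B. \<forall>b\<in>B. a \<noteq> b \<longrightarrow> ipw A w a b = 0) \<and>
           (\<forall>b\<in>B. apply_kernel A p b = fscale (ev b) b)"
proof -
  have "\<forall>k. k \<le> card A \<longrightarrow> (\<exists>B ev. B \<subseteq> Lfun A \<and> finite B \<and> card B = k \<and> 0 \<notin> B \<and>
           (\<forall>a\<in>B. \<forall>b\<in>B. a \<noteq> b \<longrightarrow> ipw A w a b = 0) \<and>
           (\<forall>b\<in>B. apply_kernel A p b = fscale (ev b) b))"
  proof (intro allI impI)
    fix k assume "k \<le> card A"
    then show "\<exists>B ev. B \<subseteq> Lfun A \<and> finite B \<and> card B = k \<and> 0 \<notin> B \<and>
           (\<forall>a\<in>B. \<forall>b\<in>B. a \<noteq> b \<longrightarrow> ipw A w a b = 0) \<and>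
           (\<forall>b\<in>B. apply_kernel A p b = fscale (ev b) b)"
    proof (induction k)
      case 0
      show ?case by (rule exI[of _ "{}"]) auto
    next
      case (Suc k)
      then have "k \<le> card A" by simp
      with Suc.IH obtain B ev where BL: "B \<subseteq> Lfun A" and finB: "finite B" and cB: "card B = k"
        and B0: "0 \<notin> B" and orth: "\<forall>a\<in>B. \<forall>b\<in>B. a \<noteq> b \<longrightarrow> ipw A w a b = 0"
        and eig: "\<forall>b\<in>B. apply_kernel A p b = fscale (ev b) b" by blast
      have indB: "fs.independent B" by (rule orth_indep[OF fin wpos BL B0 orth])
      have "\<not> Lfun A \<subseteq> fs.span B"
      proof
        assume sp: "Lfun A \<subseteq> fs.span B"
        have dL: "delta ` A \<subseteq> Lfun A" by (auto simp: delta_def Lfun_def)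
        have d0: "0 \<notin> delta ` A"
        proof
          assume "0 \<in> delta ` A"
          then obtain y where "y \<in> A" "delta y = 0" by auto
          then have "delta y y = 0" by simp
          then show False by (simp add: delta_def)
        qed
        have dorth: "\<forall>a\<in>delta ` A. \<forall>b\<in>delta ` A. a \<noteq> b \<longrightarrow> ipw A w a b = 0"
        proof (intro ballI impI)
          fix a b assume "a \<in> delta ` A" "b \<in> delta ` A" "a \<noteq> b"
          then obtain y z where "y \<in> A" "z \<in> A" "a = delta y" "b = delta z" "y \<noteq> z" by blast
          then show "ipw A w a b = 0" unfolding ipw_def delta_def by (intro sum.neutral) auto
        qed
        have "fs.independent (delta ` A)" by (rule orth_indep[OF fin wpos dL d0 dorth])
        from fs.independent_span_bound[OF finB this] dL sp
        have "card (delta ` A) \<le> card B" by auto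
        then show False using Suc.prems cB card_delta[of A] by simp
      qed
      then obtain f where f: "f \<in> Lfun A" "f \<notin> fs.span B" by blast
      define u0 where "u0 = f - (\<Sum>b\<in>B. fscale (ipw A w f b / ipw A w b b) b)"
      have u0L: "u0 \<in> Lfun A" unfolding u0_def using Lfun_subspace BL f
        by (intro fs.subspace_diff fs.subspace_sum fs.subspace_scale) auto
      have u0o: "\<forall>s\<in>B. ipw A w u0 s = 0"
      proof
        fix c assume c: "c \<in> B"
        have "ipw A w c c > 0" using ipw_pos[OF fin wpos] BL B0 c by auto
        then show "ipw A w u0 c = 0"
          unfolding u0_def ipw_diff_left coef_orth[OF finB c orth] by simp
      qed
      have u0n: "u0 \<noteq> 0"
      proof
        assume "u0 = 0"
        then have "f = (\<Sum>b\<in>B. fscale (ipw A w f b / ipw A w b b) b)"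
          unfolding u0_def by (simp only: right_minus_eq)
        also have "\<dots> \<in> fs.span B" by (intro fs.span_sum fs.span_scale fs.span_base)
        finally show False using f by simp
      qed
      obtain u \<mu> where uL: "u \<in> Lfun A" and un: "u \<noteq> 0" and uo: "\<forall>s\<in>B. ipw A w u s = 0"
        and ue: "apply_kernel A p u = fscale \<mu> u"
        using eig_exists[OF fin wpos sa eig u0L u0n u0o] by blast
      have uB: "u \<notin> B"
      proof
        assume "u \<in> B"
        then have "ipw A w u u = 0" using uo by auto
        then show False using ipw_eq0[OF fin wpos uL] un by simp
      qed
      show ?case
      proof (intro exI[of _ "insert u B"] exI[of _ "ev(u := \<mu>)"] conjI)
        show "insert u B \<subseteq> Lfun A" using BL uL by auto
        show "finite (insert u B)" using finB by simp
        show "card (insert u B) = Suc k" using finB uB cB by simp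
        show "0 \<notin> insert u B" using B0 un by auto
        show "\<forall>a\<in>insert u B. \<forall>b\<in>insert u B. a \<noteq> b \<longrightarrow> ipw A w a b = 0"
        proof (intro ballI impI)
          fix a b assume ab: "a \<in> insert u B" "b \<in> insert u B" "a \<noteq> b"
          show "ipw A w a b = 0"
          proof (cases "a = u")
            case True then show ?thesis using ab uo by auto
          next
            case False
            then have aB: "a \<in> B" using ab by auto
            show ?thesis
            proof (cases "b = u")
              case True then show ?thesis using uo aB ipw_sym[of A w a b] by auto
            next
              case False then show ?thesis using ab aB orth by auto
            qed
          qed
        qed
        show "\<forall>b\<in>insert u B. apply_kernel A p b = fscale ((ev(u := \<mu>)) b) b"
          using eig ue uB by auto
      qed
    qed
  qed
  then show ?thesis by blast
qed

definition ebasis :: "'b set \<Rightarrow> ('b \<Rightarrow> real) \<Rightarrow> ('b \<Rightarrow> 'b \<Rightarrow> real) \<Rightarrow> ('b \<Rightarrow> real) set \<Rightarrow> (('b \<Rightarrow> real) \<Rightarrow> real) \<Rightarrow> bool" where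
  "ebasis A w p B ev \<longleftrightarrow> B \<subseteq> Lfun A \<and> finite B \<and> card B = card A \<and> 0 \<notin> B \<and>
           (\<forall>a\<in>B. \<forall>b\<in>B. a \<noteq> b \<longrightarrow> ipw A w a b = 0) \<and>
           (\<forall>b\<in>B. apply_kernel A p b = fscale (ev b) b)"

lemma ebasis_exists:
  assumes "finite A" "\<forall>x\<in>A. w x > 0" "\<forall>x\<in>A. \<forall>y\<in>A. w x * p x y = w y * p y x"
  shows "\<exists>B ev. ebasis A w p B ev"
  using eigenbasis[OF assms] unfolding ebasis_def by blast

lemma eig_orth:
  assumes sa: "\<forall>x\<in>A. \<forall>y\<in>A. w x * p x y = w y * p y x"
    and f: "apply_kernel A p f = fscale l1 f" and g: "apply_kernel A p g = fscale l2 g" and ne: "l1 \<noteq> l2"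
  shows "ipw A w f g = 0"
proof -
  have "l1 * ipw A w f g = l2 * ipw A w f g"
    using K_selfadj[OF sa, of f g] f g by (simp add: ipw_scale_left ipw_scale_right del: fscale_apply)
  then show ?thesis using ne by simp
qed

lemma eigspace_subspace: "fs.subspace (eigspace A p lam)"
  unfolding fs.subspace_def eigspace_def
  using Lfun_subspace[of A, unfolded fs.subspace_def]
  by (auto simp: K_add K_scale K_zero fs.scale_right_distrib fs.scale_scale mult.commute
      simp del: fscale_apply plus_fun_apply)

context
  fixes A :: "'b set" and w p B ev
  assumes fin: "finite A" and wpos: "\<forall>x\<in>A. w x > 0"
    and sa: "\<forall>x\<in>A. \<forall>y\<in>A. w x * p x y = w y * p y x"
    and eb: "ebasis A w p B ev"
begin

lemma eb_props: "B \<subseteq> Lfun A" "finite B" "card B = card A" "0 \<notin> B"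
    "\<forall>a\<in>B. \<forall>b\<in>B. a \<noteq> b \<longrightarrow> ipw A w a b = 0"
    "\<forall>b\<in>B. apply_kernel A p b = fscale (ev b) b"
  using eb unfolding ebasis_def by auto

lemma eb_indep: "fs.independent B"
  using orth_indep[OF fin wpos] eb_props by blast

lemma eb_span: "Lfun A \<subseteq> fs.span B"
  using indep_card_spans[OF fin eb_props(1) eb_indep eb_props(3,2)] .

lemma eb_expand: "f \<in> Lfun A \<Longrightarrow> f = (\<Sum>b\<in>B. fscale (ipw A w f b / ipw A w b b) b)"
  using orth_expand[OF fin wpos eb_props(1,2,5) eb_span] .

lemma eb_eigspace: "eigspace A p lam = fs.span {b\<in>B. ev b = lam}"
proof
  show "eigspace A p lam \<subseteq> fs.span {b\<in>B. ev b = lam}"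
  proof
    fix f assume f: "f \<in> eigspace A p lam"
    then have fL: "f \<in> Lfun A" and fe: "apply_kernel A p f = fscale lam f"
      by (auto simp: eigspace_def)
    have "f = (\<Sum>b\<in>B. fscale (ipw A w f b / ipw A w b b) b)" by (rule eb_expand[OF fL])
    also have "\<dots> = (\<Sum>b\<in>{b\<in>B. ev b = lam}. fscale (ipw A w f b / ipw A w b b) b)"
    proof (rule sum.mono_neutral_right)
      show "finite B" by (rule eb_props(2))
      show "{b \<in> B. ev b = lam} \<subseteq> B" by auto
      show "\<forall>i\<in>B - {b \<in> B. ev b = lam}. fscale (ipw A w f i / ipw A w i i) i = 0"
      proof
        fix b assume b: "b \<in> B - {b \<in> B. ev b = lam}"
        have "ipw A w f b = 0"
          by (rule eig_orth[OF sa fe]) (use b eb_props(6) in auto)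
        then show "fscale (ipw A w f b / ipw A w b b) b = 0" by (simp add: fun_eq_iff)
      qed
    qed
    also have "\<dots> \<in> fs.span {b\<in>B. ev b = lam}"
      by (intro fs.span_sum fs.span_scale fs.span_base) auto
    finally show "f \<in> fs.span {b\<in>B. ev b = lam}" .
  qed
  show "fs.span {b\<in>B. ev b = lam} \<subseteq> eigspace A p lam"
    by (rule fs.span_minimal[OF _ eigspace_subspace]) (use eb_props in \<open>auto simp: eigspace_def\<close>)
qed

lemma eb_dim: "fs.dim (eigspace A p lam) = card {b\<in>B. ev b = lam}"
proof (rule fs.dim_eq_card)
  show "fs.span {b \<in> B. ev b = lam} = fs.span (eigspace A p lam)"
    unfolding eb_eigspace fs.span_span ..
  show "fs.independent {b \<in> B. ev b = lam}"
    by (rule fs.independent_mono[OF eb_indep]) auto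
qed

lemma eb_eigvals: "eigvals A p = ev ` B"
proof
  show "eigvals A p \<subseteq> ev ` B"
  proof
    fix lam assume "lam \<in> eigvals A p"
    then obtain f where f: "f \<in> Lfun A" "f \<noteq> 0" "apply_kernel A p f = fscale lam f"
      by (auto simp: eigvals_def zero_fun_def)
    then have "f \<in> eigspace A p lam" by (simp add: eigspace_def)
    then have "f \<in> fs.span {b\<in>B. ev b = lam}" by (simp add: eb_eigspace)
    moreover have "{b\<in>B. ev b = lam} \<noteq> {}"
    proof
      assume "{b\<in>B. ev b = lam} = {}"
      with \<open>f \<in> fs.span {b\<in>B. ev b = lam}\<close> have "f = 0" by simp
      with f show False by simp
    qed
    ultimately show "lam \<in> ev ` B" by blast
  qed
  show "ev ` B \<subseteq> eigvals A p"
  proof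
    fix lam assume "lam \<in> ev ` B"
    then obtain b where b: "b \<in> B" "lam = ev b" by auto
    then have "b \<noteq> (\<lambda>_. 0)" using eb_props(4) unfolding zero_fun_def by auto
    then show "lam \<in> eigvals A p" unfolding eigvals_def using b eb_props(1,6) by auto
  qed
qed

end

lemma kpow_pos_path:
  assumes st: "stochastic A p" and fe: "apply_kernel A p f = f"
    and mx: "\<forall>z\<in>A. f z \<le> M"
  shows "z \<in> A \<Longrightarrow> f z = M \<Longrightarrow> y \<in> A \<Longrightarrow> kpow A p k z y > 0 \<Longrightarrow> f y = M"
proof (induction k arbitrary: z)
  case 0
  then have "z = y" by (simp split: if_splits)
  then show ?case using 0 by simp
next
  case (Suc k)
  have zA: "z \<in> A" using Suc.prems(1) .
  have s1: "(\<Sum>v\<in>A. p z v) = 1" using st zA unfolding stochastic_def by blast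
  have fA: "finite A"
  proof (rule ccontr)
    assume "infinite A" then have "(\<Sum>v\<in>A. p z v) = 0" by simp
    then show False using s1 by simp
  qed
  have pnn: "\<forall>v\<in>A. p z v \<ge> 0" using st zA unfolding stochastic_def by blast
  from Suc.prems(4) have sp: "0 < (\<Sum>u\<in>A. p z u * kpow A p k u y)" by simp
  have "\<exists>u\<in>A. p z u * kpow A p k u y > 0"
  proof (rule ccontr)
    assume "\<not> (\<exists>u\<in>A. p z u * kpow A p k u y > 0)"
    then have "\<forall>u\<in>A. p z u * kpow A p k u y \<le> 0" by (simp add: not_less)
    then have "(\<Sum>u\<in>A. p z u * kpow A p k u y) \<le> 0" by (intro sum_nonpos) blast
    then show False using sp by simp
  qed
  then obtain u where uA: "u \<in> A" and up: "p z u * kpow A p k u y > 0" by blast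
  have pzu: "p z u \<ge> 0" using pnn uA by blast
  have pos1: "p z u > 0"
  proof (rule ccontr)
    assume "\<not> p z u > 0" then have "p z u = 0" using pzu by simp
    then show False using up by simp
  qed
  have pos2: "kpow A p k u y > 0"
  proof (rule ccontr)
    assume "\<not> kpow A p k u y > 0" then have "kpow A p k u y \<le> 0" by simp
    then have "p z u * kpow A p k u y \<le> 0" using pzu by (simp add: mult_nonneg_nonpos)
    then show False using up by simp
  qed
  have eq: "f z = (\<Sum>v\<in>A. p z v * f v)" using fe zA K_in[of z A p f] by simp
  have "(\<Sum>v\<in>A. p z v * (M - f v)) = M * (\<Sum>v\<in>A. p z v) - (\<Sum>v\<in>A. p z v * f v)"
    by (simp add: right_diff_distrib sum_subtractf sum_distrib_left mult.commute)
  also have "\<dots> = 0" using s1 eq Suc.prems(2) by simp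
  finally have z: "(\<Sum>v\<in>A. p z v * (M - f v)) = 0" .
  have nn: "\<forall>v\<in>A. 0 \<le> p z v * (M - f v)"
    using pnn mx by (simp add: mult_nonneg_nonneg)
  have all0: "\<forall>v\<in>A. p z v * (M - f v) = 0"
    using sum_nonneg_eq_0_iff[OF fA, of "\<lambda>v. p z v * (M - f v)"] nn z by simp
  have "p z u * (M - f u) = 0" using all0 uA by blast
  then have fu: "f u = M" using pos1 by simp
  show ?case by (rule Suc.IH[OF uA fu Suc.prems(3) pos2])
qed

lemma harmonic_const:
  assumes fin: "finite A" and st: "stochastic A p" and irr: "irreducible_kernel A p"
    and f: "f \<in> eigspace A p 1" and x: "x \<in> A" and y: "y \<in> A"
  shows "f x = f y"
proof -
  have fe: "apply_kernel A p f = f" using f by (simp add: eigspace_def fs.scale_one del: fscale_apply)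
  have ne: "A \<noteq> {}" using x by auto
  define M where "M = Max (f ` A)"
  have "M \<in> f ` A" unfolding M_def using fin ne by (intro Max_in) auto
  then obtain x0 where x0: "x0 \<in> A" "f x0 = M" by auto
  have mx: "\<forall>z\<in>A. f z \<le> M" unfolding M_def using fin by auto
  have "f z = M" if zA: "z \<in> A" for z
  proof -
    obtain k where "kpow A p k x0 z > 0" using irr x0(1) zA unfolding irreducible_kernel_def by blast
    then show ?thesis using kpow_pos_path[OF st fe mx x0 zA] by simp
  qed
  then show ?thesis using x y by simp
qed

definition ind :: "'b set \<Rightarrow> 'b \<Rightarrow> real" where "ind A = (\<lambda>x. if x \<in> A then 1 else 0)"

lemma eig1_span:
  assumes fin: "finite A" and st: "stochastic A p" and irr: "irreducible_kernel A p" and ne: "A \<noteq> {}"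
  shows "eigspace A p 1 = fs.span {ind A}"
proof
  show "eigspace A p 1 \<subseteq> fs.span {ind A}"
  proof
    fix f assume f: "f \<in> eigspace A p 1"
    obtain a where a: "a \<in> A" using ne by auto
    have "f = fscale (f a) (ind A)"
    proof
      fix x show "f x = fscale (f a) (ind A) x"
        using harmonic_const[OF fin st irr f _ a, of x] f
        by (cases "x \<in> A") (auto simp: ind_def eigspace_def Lfun_def)
    qed
    also have "\<dots> \<in> fs.span {ind A}" by (intro fs.span_scale fs.span_base) auto
    finally show "f \<in> fs.span {ind A}" .
  qed
  have "ind A \<in> eigspace A p 1"
    using st by (auto simp: eigspace_def ind_def Lfun_def apply_kernel_def stochastic_def fun_eq_iff
        if_distrib[of "\<lambda>t. _ * t"] sum.If_cases)
  then show "fs.span {ind A} \<subseteq> eigspace A p 1"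
    by (intro fs.span_minimal eigspace_subspace) auto
qed

lemma eig1_dim:
  assumes fin: "finite A" and st: "stochastic A p" and irr: "irreducible_kernel A p" and ne: "A \<noteq> {}"
  shows "fs.dim (eigspace A p 1) = 1"
proof -
  obtain a where a: "a \<in> A" using ne by auto
  have "ind A \<noteq> 0"
  proof
    assume "ind A = 0" then have "ind A a = 0" by simp
    then show False using a by (simp add: ind_def)
  qed
  then have "fs.independent {ind A}" by simp
  then show ?thesis unfolding eig1_span[OF assms] fs.dim_span by (simp add: fs.dim_eq_card_independent)
qed

lemma sum_zero_eig:
  assumes fin: "finite A" and st: "stochastic A p" and sy: "\<forall>x\<in>A. \<forall>y\<in>A. p x y = p y x"
    and f: "f \<in> eigspace A p lam" and l: "lam \<noteq> 1"
  shows "(\<Sum>x\<in>A. f x) = 0"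
proof -
  have fe: "apply_kernel A p f = fscale lam f" using f by (simp add: eigspace_def)
  have "lam * (\<Sum>x\<in>A. f x) = (\<Sum>x\<in>A. apply_kernel A p f x)"
    unfolding fe by (simp add: sum_distrib_left)
  also have "\<dots> = (\<Sum>x\<in>A. \<Sum>y\<in>A. p x y * f y)" by (intro sum.cong refl) (simp add: K_in)
  also have "\<dots> = (\<Sum>y\<in>A. \<Sum>x\<in>A. p y x * f y)" using sy by (subst sum.swap) (intro sum.cong refl; simp)
  also have "\<dots> = (\<Sum>y\<in>A. f y * (\<Sum>x\<in>A. p y x))" by (simp add: sum_distrib_left mult.commute)
  also have "\<dots> = (\<Sum>y\<in>A. f y)" using st by (intro sum.cong refl) (simp add: stochastic_def)
  finally have "(lam - 1) * (\<Sum>x\<in>A. f x) = 0" by (simp add: algebra_simps)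
  then show ?thesis using l by simp
qed

definition tens :: "nat \<Rightarrow> (nat \<Rightarrow> 'a set) \<Rightarrow> (nat \<Rightarrow> 'a \<Rightarrow> real) \<Rightarrow> (nat \<Rightarrow> 'a) \<Rightarrow> real" where
  "tens n X f = (\<lambda>x. if x \<in> prodX n X then (\<Prod>i\<in>{1..n}. f i (x i)) else 0)"

lemma split3_set: "k \<in> {1..n} \<Longrightarrow> {1..n} = insert k ({1..<k} \<union> {k<..(n::nat)})"
  by auto

lemma prod_split3:
  fixes h :: "nat \<Rightarrow> 'c::comm_monoid_mult"
  assumes "k \<in> {1..n}"
  shows "(\<Prod>j\<in>{1..n}. h j) = (\<Prod>j\<in>{1..<k}. h j) * h k * (\<Prod>j\<in>{k<..n}. h j)"
proof -
  have "(\<Prod>j\<in>{1..n}. h j) = h k * (\<Prod>j\<in>{1..<k} \<union> {k<..n}. h j)"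
    by (subst split3_set[OF assms]) (simp add: prod.insert)
  also have "(\<Prod>j\<in>{1..<k} \<union> {k<..n}. h j) = (\<Prod>j\<in>{1..<k}. h j) * (\<Prod>j\<in>{k<..n}. h j)"
    by (rule prod.union_disjoint) auto
  finally show ?thesis by (simp add: mult_ac)
qed

lemma sum_split3:
  fixes h :: "nat \<Rightarrow> 'c::comm_monoid_add"
  assumes "k \<in> {1..n}"
  shows "(\<Sum>j\<in>{1..n}. h j) = (\<Sum>j\<in>{1..<k}. h j) + h k + (\<Sum>j\<in>{k<..n}. h j)"
proof -
  have "(\<Sum>j\<in>{1..n}. h j) = h k + (\<Sum>j\<in>{1..<k} \<union> {k<..n}. h j)"
    by (subst split3_set[OF assms]) (simp add: sum.insert)
  also have "(\<Sum>j\<in>{1..<k} \<union> {k<..n}. h j) = (\<Sum>j\<in>{1..<k}. h j) + (\<Sum>j\<in>{k<..n}. h j)"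
    by (rule sum.union_disjoint) auto
  finally show ?thesis by (simp add: ac_simps)
qed

lemma P_tensor:
  assumes fin: "\<forall>i\<in>{1..n}. finite (X i)" and x: "x \<in> prodX n X"
  shows "apply_kernel (prodX n X) (nested_kernel n X p0 p) (tens n X f) x =
    (\<Sum>k\<in>{1..n}. p0 k * (\<Prod>j\<in>{1..<k}. f j (x j)) * apply_kernel (X k) (p k) (f k) (x k) *
        (\<Prod>j\<in>{k<..n}. (\<Sum>z\<in>X j. f j z) / real (card (X j))))"
proof -
  define g where "g k j z = (if j < k then (if x j = z then 1 else 0) * f j z
      else if j = k then p k (x k) z * f k z else f j z / real (card (X j)))" for k j z
  have finP: "finite (prodX n X)" using fin by (intro finite_PiE) auto
  have pt: "nested_kernel n X p0 p x y * tens n X f y = (\<Sum>k\<in>{1..n}. p0 k * (\<Prod>j\<in>{1..n}. g k j (y j)))"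
    if y: "y \<in> prodX n X" for y
  proof -
    have "nested_kernel n X p0 p x y * tens n X f y =
       (\<Sum>k\<in>{1..n}. p0 k * ((\<Prod>j\<in>{1..<k}. if x j = y j then 1 else 0) * p k (x k) (y k)
          / (\<Prod>j\<in>{k<..n}. real (card (X j))) * (\<Prod>j\<in>{1..n}. f j (y j))))"
      unfolding nested_kernel_def tens_def using y by (simp add: sum_distrib_left times_divide_eq_right times_divide_eq_left mult_ac)
    also have "\<dots> = (\<Sum>k\<in>{1..n}. p0 k * (\<Prod>j\<in>{1..n}. g k j (y j)))"
    proof (intro sum.cong refl arg_cong2[where f="(*)"])
      fix k assume k: "k \<in> {1..n}"
      have a: "(\<Prod>j\<in>{1..<k}. g k j (y j)) = (\<Prod>j\<in>{1..<k}. if x j = y j then 1 else 0) * (\<Prod>j\<in>{1..<k}. f j (y j))"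
        by (subst prod.distrib[symmetric]) (intro prod.cong refl, simp add: g_def)
      have b: "(\<Prod>j\<in>{k<..n}. g k j (y j)) = (\<Prod>j\<in>{k<..n}. f j (y j)) / (\<Prod>j\<in>{k<..n}. real (card (X j)))"
        by (subst prod_dividef[symmetric]) (intro prod.cong refl, simp add: g_def)
      have c: "g k k (y k) = p k (x k) (y k) * f k (y k)" by (simp add: g_def)
      show "(\<Prod>j\<in>{1..<k}. if x j = y j then 1 else 0) * p k (x k) (y k) /
          (\<Prod>j\<in>{k<..n}. real (card (X j))) * (\<Prod>j\<in>{1..n}. f j (y j)) =
          (\<Prod>j\<in>{1..n}. g k j (y j))"
        unfolding prod_split3[OF k, of "\<lambda>j. g k j (y j)"] prod_split3[OF k, of "\<lambda>j. f j (y j)"] a b c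
        by (simp add: field_simps)
    qed
    finally show ?thesis .
  qed
  have "apply_kernel (prodX n X) (nested_kernel n X p0 p) (tens n X f) x
      = (\<Sum>y\<in>prodX n X. \<Sum>k\<in>{1..n}. p0 k * (\<Prod>j\<in>{1..n}. g k j (y j)))"
    using x by (simp add: apply_kernel_def pt cong: sum.cong)
  also have "\<dots> = (\<Sum>k\<in>{1..n}. p0 k * (\<Sum>y\<in>prodX n X. \<Prod>j\<in>{1..n}. g k j (y j)))"
    by (subst sum.swap) (simp add: sum_distrib_left)
  also have "\<dots> = (\<Sum>k\<in>{1..n}. p0 k * (\<Prod>j\<in>{1..n}. \<Sum>z\<in>X j. g k j z))"
    using fin by (intro sum.cong refl arg_cong2[where f="(*)"] prod_sum_PiE[symmetric]) auto
  also have "\<dots> = (\<Sum>k\<in>{1..n}. p0 k * (\<Prod>j\<in>{1..<k}. f j (x j)) * apply_kernel (X k) (p k) (f k) (x k) *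
        (\<Prod>j\<in>{k<..n}. (\<Sum>z\<in>X j. f j z) / real (card (X j))))"
  proof (intro sum.cong refl)
    fix k assume k: "k \<in> {1..n}"
    have xk: "x j \<in> X j" if "j \<in> {1..n}" for j using x that by (auto simp: PiE_iff)
    have a: "(\<Prod>j\<in>{1..<k}. \<Sum>z\<in>X j. g k j z) = (\<Prod>j\<in>{1..<k}. f j (x j))"
    proof (intro prod.cong refl)
      fix j assume j: "j \<in> {1..<k}"
      then have "j \<in> {1..n}" using k by auto
      then show "(\<Sum>z\<in>X j. g k j z) = f j (x j)"
        using j xk fin by (simp add: g_def if_distrib[of "\<lambda>t. t * _"] sum.delta cong: if_cong)
    qed
    have b: "(\<Prod>j\<in>{k<..n}. \<Sum>z\<in>X j. g k j z) = (\<Prod>j\<in>{k<..n}. (\<Sum>z\<in>X j. f j z) / real (card (X j)))"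
      by (intro prod.cong refl) (simp add: g_def sum_divide_distrib)
    have c: "(\<Sum>z\<in>X k. g k k z) = apply_kernel (X k) (p k) (f k) (x k)"
      using xk[OF k] by (simp add: g_def K_in)
    show "p0 k * (\<Prod>j\<in>{1..n}. \<Sum>z\<in>X j. g k j z) = p0 k * (\<Prod>j\<in>{1..<k}. f j (x j)) *
        apply_kernel (X k) (p k) (f k) (x k) * (\<Prod>j\<in>{k<..n}. (\<Sum>z\<in>X j. f j z) / real (card (X j)))"
      unfolding prod_split3[OF k, of "\<lambda>j. \<Sum>z\<in>X j. g k j z"] a b c by (simp add: mult_ac)
  qed
  finally show ?thesis .
qed

definition wt :: "(nat \<Rightarrow> 'a \<Rightarrow> real) \<Rightarrow> nat \<Rightarrow> 'a \<Rightarrow> real" where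
  "wt \<pi> i = (if i = 1 then \<pi> 1 else (\<lambda>_. 1))"

definition Wt :: "nat \<Rightarrow> (nat \<Rightarrow> 'a \<Rightarrow> real) \<Rightarrow> (nat \<Rightarrow> 'a) \<Rightarrow> real" where
  "Wt n \<pi> x = (\<Prod>i\<in>{1..n}. wt \<pi> i (x i))"

lemma tens_Lfun: "tens n X f \<in> Lfun (prodX n X)"
  by (simp add: tens_def Lfun_def)

lemma ip_tens:
  assumes fin: "\<forall>i\<in>{1..n}. finite (X i)"
  shows "ipw (prodX n X) (Wt n \<pi>) (tens n X f) (tens n X g) = (\<Prod>i\<in>{1..n}. ipw (X i) (wt \<pi> i) (f i) (g i))"
proof -
  have "ipw (prodX n X) (Wt n \<pi>) (tens n X f) (tens n X g)
      = (\<Sum>x\<in>prodX n X. \<Prod>i\<in>{1..n}. wt \<pi> i (x i) * f i (x i) * g i (x i))"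
    unfolding ipw_def by (intro sum.cong refl) (simp add: tens_def Wt_def prod.distrib)
  also have "\<dots> = (\<Prod>i\<in>{1..n}. ipw (X i) (wt \<pi> i) (f i) (g i))"
    unfolding ipw_def using fin by (intro prod_sum_PiE[symmetric]) auto
  finally show ?thesis .
qed

lemma tens_PiE_ne:
  assumes "b \<in> PiE {1..n} B" "b' \<in> PiE {1..n} B" "b \<noteq> b'"
  obtains i where "i \<in> {1..n}" "b i \<noteq> b' i"
  using assms by (metis PiE_ext)

lemma eb_expand_sub:
  assumes fin: "finite A" and wpos: "\<forall>x\<in>A. w x > 0"
    and sa: "\<forall>x\<in>A. \<forall>y\<in>A. w x * p x y = w y * p y x" and eb: "ebasis A w p B ev"
    and f: "f \<in> Lfun A" and S: "S \<subseteq> B" and z: "\<forall>b\<in>B - S. ipw A w f b = 0"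
  shows "f = (\<Sum>b\<in>S. fscale (ipw A w f b / ipw A w b b) b)"
proof -
  have "f = (\<Sum>b\<in>B. fscale (ipw A w f b / ipw A w b b) b)" by (rule eb_expand[OF fin wpos sa eb f])
  also have "\<dots> = (\<Sum>b\<in>S. fscale (ipw A w f b / ipw A w b b) b)"
    by (rule sum.mono_neutral_right) (use eb_props(2)[OF fin wpos sa eb] S z in \<open>auto simp: fun_eq_iff\<close>)
  finally show ?thesis .
qed

lemma tens_expand:
  assumes finS: "\<forall>j\<in>{1..n}. finite (S j)"
    and fe: "\<forall>j\<in>{1..n}. f j = (\<Sum>c\<in>S j. fscale (\<alpha> j c) c)"
  shows "tens n X f = (\<Sum>b\<in>PiE {1..n} S. fscale (\<Prod>j\<in>{1..n}. \<alpha> j (b j)) (tens n X b))"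
proof
  fix x
  show "tens n X f x = (\<Sum>b\<in>PiE {1..n} S. fscale (\<Prod>j\<in>{1..n}. \<alpha> j (b j)) (tens n X b)) x"
  proof (cases "x \<in> prodX n X")
    case False then show ?thesis by (simp add: tens_def sum_fun_apply)
  next
    case True
    have "tens n X f x = (\<Prod>j\<in>{1..n}. \<Sum>c\<in>S j. \<alpha> j c * c (x j))"
      using True fe by (simp add: tens_def sum_fun_apply)
    also have "\<dots> = (\<Sum>b\<in>PiE {1..n} S. \<Prod>j\<in>{1..n}. \<alpha> j (b j) * b j (x j))"
      using finS by (intro prod_sum_PiE) auto
    also have "\<dots> = (\<Sum>b\<in>PiE {1..n} S. fscale (\<Prod>j\<in>{1..n}. \<alpha> j (b j)) (tens n X b)) x"
      using True by (simp add: sum_fun_apply tens_def prod.distrib)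
    finally show ?thesis .
  qed
qed

lemma tensor_sub_eq: "tensor_sub n X V = fs.span {tens n X f | f. \<forall>i\<in>{1..n}. f i \<in> V i}"
  unfolding tensor_sub_def tens_def ..

definition Gs :: "(nat \<Rightarrow> ('a \<Rightarrow> real) set) \<Rightarrow> (nat \<Rightarrow> ('a \<Rightarrow> real) \<Rightarrow> real) \<Rightarrow> nat \<Rightarrow> real \<Rightarrow> nat \<Rightarrow> ('a \<Rightarrow> real) set" where
  "Gs B ev i lam j = (if j < i then B j else if j = i then {b\<in>B i. ev i b = lam} else {b\<in>B j. ev j b = 1})"

lemma wt_pos:
  assumes "\<forall>i\<in>{1..n}. positive_prob (X i) (\<pi> i)" "i \<in> {1..n}"
  shows "\<forall>x\<in>X i. wt \<pi> i x > 0"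
  using assms by (auto simp: wt_def positive_prob_def)

lemma wt_sa:
  assumes "\<forall>i\<in>{1..n}. detailed_balance (X i) (\<pi> i) (p i)"
    and "\<forall>i\<in>{2..n}. \<forall>x\<in>X i. \<forall>y\<in>X i. p i x y = p i y x" "i \<in> {1..n}"
  shows "\<forall>x\<in>X i. \<forall>y\<in>X i. wt \<pi> i x * p i x y = wt \<pi> i y * p i y x"
  using assms by (cases "i = 1") (auto simp: wt_def detailed_balance_def)

locale PS =
  fixes n :: nat and X :: "nat \<Rightarrow> 'a set" and p :: "nat \<Rightarrow> 'a \<Rightarrow> 'a \<Rightarrow> real"
    and \<pi> :: "nat \<Rightarrow> 'a \<Rightarrow> real" and p0 :: "nat \<Rightarrow> real"
    and B :: "nat \<Rightarrow> ('a \<Rightarrow> real) set" and ev :: "nat \<Rightarrow> ('a \<Rightarrow> real) \<Rightarrow> real"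
  assumes n2: "n \<ge> 2"
    and fin: "\<forall>i\<in>{1..n}. finite (X i)"
    and stoch: "\<forall>i\<in>{1..n}. stochastic (X i) (p i)"
    and irr: "\<forall>i\<in>{1..n}. irreducible_kernel (X i) (p i)"
    and pos: "\<forall>i\<in>{1..n}. positive_prob (X i) (\<pi> i)"
    and db: "\<forall>i\<in>{1..n}. detailed_balance (X i) (\<pi> i) (p i)"
    and sym: "\<forall>i\<in>{2..n}. \<forall>x\<in>X i. \<forall>y\<in>X i. p i x y = p i y x"
    and eb: "\<forall>i\<in>{1..n}. ebasis (X i) (wt \<pi> i) (p i) (B i) (ev i)"
begin

lemma finX: "i \<in> {1..n} \<Longrightarrow> finite (X i)" using fin by auto
lemma wposX: "i \<in> {1..n} \<Longrightarrow> \<forall>x\<in>X i. wt \<pi> i x > 0" using wt_pos[OF pos] by blast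
lemma saX: "i \<in> {1..n} \<Longrightarrow> \<forall>x\<in>X i. \<forall>y\<in>X i. wt \<pi> i x * p i x y = wt \<pi> i y * p i y x"
  using wt_sa[OF db sym] by blast
lemma ebX: "i \<in> {1..n} \<Longrightarrow> ebasis (X i) (wt \<pi> i) (p i) (B i) (ev i)" using eb by blast
lemma neX: assumes i: "i \<in> {1..n}" shows "X i \<noteq> {}"
proof -
  have "sum (\<pi> i) (X i) = 1" using pos i by (auto simp: positive_prob_def)
  then show ?thesis by auto
qed

lemma ebp:
  assumes i: "i \<in> {1..n}"
  shows "B i \<subseteq> Lfun (X i)" "finite (B i)" "card (B i) = card (X i)" "0 \<notin> B i"
    "\<forall>a\<in>B i. \<forall>b\<in>B i. a \<noteq> b \<longrightarrow> ipw (X i) (wt \<pi> i) a b = 0"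
    "\<forall>b\<in>B i. apply_kernel (X i) (p i) b = fscale (ev i b) b"
  using eb_props[OF finX[OF i] wposX[OF i] saX[OF i] ebX[OF i]] by auto

lemma finP: "finite (prodX n X)" using fin by (intro finite_PiE) auto

lemma Wpos: "\<forall>x\<in>prodX n X. Wt n \<pi> x > 0"
  unfolding Wt_def using wposX by (auto intro!: prod_pos simp: PiE_iff)

lemma finB: "i \<in> {1..n} \<Longrightarrow> finite (B i)" using ebp(2) .

lemma orth_T:
  assumes "b \<in> PiE {1..n} B" "b' \<in> PiE {1..n} B" "b \<noteq> b'"
  shows "ipw (prodX n X) (Wt n \<pi>) (tens n X b) (tens n X b') = 0"
proof -
  obtain i where i: "i \<in> {1..n}" "b i \<noteq> b' i" using tens_PiE_ne[OF assms] .
  have "ipw (X i) (wt \<pi> i) (b i) (b' i) = 0"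
    using ebp(5)[OF i(1)] assms(1,2) i by (auto simp: PiE_iff)
  then show ?thesis unfolding ip_tens[OF fin] using i(1) by (intro prod_zero) auto
qed

lemma pos_T:
  assumes "b \<in> PiE {1..n} B"
  shows "ipw (prodX n X) (Wt n \<pi>) (tens n X b) (tens n X b) > 0"
  unfolding ip_tens[OF fin]
proof (rule prod_pos)
  fix i assume i: "i \<in> {1..n}"
  have bi: "b i \<in> B i" using assms i by (auto simp: PiE_iff)
  show "ipw (X i) (wt \<pi> i) (b i) (b i) > 0"
  proof (rule ipw_pos[OF finX[OF i] wposX[OF i]])
    show "b i \<in> Lfun (X i)" using ebp(1)[OF i] \<open>b i \<in> B i\<close> by blast
    show "b i \<noteq> 0" using ebp(4)[OF i] \<open>b i \<in> B i\<close> by metis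
  qed
qed

lemma inj_T: "inj_on (tens n X) (PiE {1..n} B)"
proof
  fix b b' assume b: "b \<in> PiE {1..n} B" "b' \<in> PiE {1..n} B" and e: "tens n X b = tens n X b'"
  show "b = b'"
  proof (rule ccontr)
    assume "b \<noteq> b'"
    then have "ipw (prodX n X) (Wt n \<pi>) (tens n X b) (tens n X b') = 0" by (rule orth_T[OF b])
    then show False using pos_T[OF b(1)] e by simp
  qed
qed

lemma TB_props:
  "tens n X ` PiE {1..n} B \<subseteq> Lfun (prodX n X)"
  "0 \<notin> tens n X ` PiE {1..n} B"
  "\<forall>a\<in>tens n X ` PiE {1..n} B. \<forall>c\<in>tens n X ` PiE {1..n} B. a \<noteq> c \<longrightarrow> ipw (prodX n X) (Wt n \<pi>) a c = 0"
proof -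
  show "tens n X ` PiE {1..n} B \<subseteq> Lfun (prodX n X)" using tens_Lfun by auto
  show "0 \<notin> tens n X ` PiE {1..n} B"
  proof
    assume "0 \<in> tens n X ` PiE {1..n} B"
    then obtain b where "b \<in> PiE {1..n} B" "tens n X b = 0" by auto
    then show False using pos_T[of b] by (simp add: ipw_def)
  qed
  show "\<forall>a\<in>tens n X ` PiE {1..n} B. \<forall>c\<in>tens n X ` PiE {1..n} B. a \<noteq> c \<longrightarrow> ipw (prodX n X) (Wt n \<pi>) a c = 0"
    using orth_T by blast
qed

lemma TB_indep: "fs.independent (tens n X ` PiE {1..n} B)"
  using orth_indep[OF finP Wpos TB_props] .

lemma TB_span: "Lfun (prodX n X) \<subseteq> fs.span (tens n X ` PiE {1..n} B)"
proof (rule indep_card_spans[OF finP TB_props(1) TB_indep])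
  have "card (tens n X ` PiE {1..n} B) = card (PiE {1..n} B)" by (rule card_image[OF inj_T])
  also have "\<dots> = (\<Prod>i\<in>{1..n}. card (B i))" by (simp add: card_PiE)
  also have "\<dots> = (\<Prod>i\<in>{1..n}. card (X i))" using ebp(3) by (intro prod.cong) auto
  also have "\<dots> = card (prodX n X)" by (simp add: card_PiE)
  finally show "card (tens n X ` PiE {1..n} B) = card (prodX n X)" .
  show "finite (tens n X ` PiE {1..n} B)" using finB by (intro finite_imageI finite_PiE) auto
qed

end

context PS begin

lemma Gs_sub: "j \<in> {1..n} \<Longrightarrow> Gs B ev i lam j \<subseteq> B j"
  by (auto simp: Gs_def)

lemma G_sub: "PiE {1..n} (Gs B ev i lam) \<subseteq> PiE {1..n} B"
  by (rule PiE_mono) (rule Gs_sub)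

lemma eigspace_L: "f \<in> eigspace A q l \<Longrightarrow> f \<in> Lfun A"
  by (simp add: eigspace_def)

lemma basis_eig: "j \<in> {1..n} \<Longrightarrow> b \<in> B j \<Longrightarrow> b \<in> eigspace (X j) (p j) (ev j b)"
  using ebp(1,6) by (auto simp: eigspace_def)

lemma block_span:
  assumes i: "i \<in> {1..n}"
  shows "block_sub n X p i lam = fs.span (tens n X ` PiE {1..n} (Gs B ev i lam))"
proof
  define V where "V j = (if j < i then Lfun (X j) else if j = i then eigspace (X i) (p i) lam
      else eigspace (X j) (p j) 1)" for j
  have bs: "block_sub n X p i lam = fs.span {tens n X f | f. \<forall>j\<in>{1..n}. f j \<in> V j}"
    unfolding block_sub_def tensor_sub_eq V_def ..
  show "fs.span (tens n X ` PiE {1..n} (Gs B ev i lam)) \<subseteq> block_sub n X p i lam"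
    unfolding bs
  proof (rule fs.span_mono, rule image_subsetI)
    fix b assume b: "b \<in> PiE {1..n} (Gs B ev i lam)"
    have "b j \<in> V j" if j: "j \<in> {1..n}" for j
    proof -
      have bj: "b j \<in> Gs B ev i lam j" using b j by (auto simp: PiE_iff)
      show ?thesis
      proof (cases "j < i")
        case True then show ?thesis using bj ebp(1)[OF j] by (auto simp: V_def Gs_def)
      next
        case False
        then show ?thesis using bj basis_eig[OF j, of "b j"] by (auto simp: V_def Gs_def)
      qed
    qed
    then show "tens n X b \<in> {tens n X f | f. \<forall>j\<in>{1..n}. f j \<in> V j}" by blast
  qed
  show "block_sub n X p i lam \<subseteq> fs.span (tens n X ` PiE {1..n} (Gs B ev i lam))"
    unfolding bs
  proof (rule fs.span_minimal[OF _ fs.subspace_span], rule subsetI)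
    fix t assume "t \<in> {tens n X f | f. \<forall>j\<in>{1..n}. f j \<in> V j}"
    then obtain f where t: "t = tens n X f" and f: "\<forall>j\<in>{1..n}. f j \<in> V j" by blast
    define \<alpha> where "\<alpha> j c = ipw (X j) (wt \<pi> j) (f j) c / ipw (X j) (wt \<pi> j) c c" for j c
    have fe: "\<forall>j\<in>{1..n}. f j = (\<Sum>c\<in>Gs B ev i lam j. fscale (\<alpha> j c) c)"
    proof
      fix j assume j: "j \<in> {1..n}"
      have fjV: "f j \<in> V j" using f j by blast
      have fL: "f j \<in> Lfun (X j)" using fjV by (auto simp: V_def eigspace_def split: if_splits)
      show "f j = (\<Sum>c\<in>Gs B ev i lam j. fscale (\<alpha> j c) c)"
        unfolding \<alpha>_def
      proof (rule eb_expand_sub[OF finX[OF j] wposX[OF j] saX[OF j] ebX[OF j] fL Gs_sub[OF j]])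
        show "\<forall>c\<in>B j - Gs B ev i lam j. ipw (X j) (wt \<pi> j) (f j) c = 0"
        proof
          fix c assume c: "c \<in> B j - Gs B ev i lam j"
          have ce: "apply_kernel (X j) (p j) c = fscale (ev j c) c" using ebp(6)[OF j] c by blast
          show "ipw (X j) (wt \<pi> j) (f j) c = 0"
          proof (cases "j < i")
            case True then show ?thesis using c by (simp add: Gs_def)
          next
            case False
            then have "apply_kernel (X j) (p j) (f j) = fscale (if j = i then lam else 1) (f j)"
              using fjV by (auto simp: V_def eigspace_def)
            moreover have "(if j = i then lam else 1) \<noteq> ev j c" using c False by (auto simp: Gs_def)
            ultimately show ?thesis using eig_orth[OF saX[OF j] _ ce] by blast
          qed
        qed
      qed
    qed
    have finGs: "\<forall>j\<in>{1..n}. finite (Gs B ev i lam j)"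
    proof
      fix j assume j: "j \<in> {1..n}"
      show "finite (Gs B ev i lam j)" by (rule finite_subset[OF Gs_sub[OF j] finB[OF j]])
    qed
    have "t = (\<Sum>b\<in>PiE {1..n} (Gs B ev i lam). fscale (\<Prod>j\<in>{1..n}. \<alpha> j (b j)) (tens n X b))"
      unfolding t by (rule tens_expand[OF finGs fe])
    also have "\<dots> \<in> fs.span (tens n X ` PiE {1..n} (Gs B ev i lam))"
      by (intro fs.span_sum fs.span_scale fs.span_base) auto
    finally show "t \<in> fs.span (tens n X ` PiE {1..n} (Gs B ev i lam))" .
  qed
qed

lemma dim_eig_card:
  assumes j: "j \<in> {1..n}" shows "fs.dim (eigspace (X j) (p j) l) = card {b\<in>B j. ev j b = l}"
  by (rule eb_dim[OF finX[OF j] wposX[OF j] saX[OF j] ebX[OF j]])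

lemma card_ev1:
  assumes j: "j \<in> {1..n}" shows "card {b\<in>B j. ev j b = 1} = 1"
proof -
  have "stochastic (X j) (p j)" "irreducible_kernel (X j) (p j)" using stoch irr j by auto
  from eig1_dim[OF finX[OF j] this neX[OF j]] dim_eig_card[OF j, of 1] show ?thesis by simp
qed

lemma block_dim:
  assumes i: "i \<in> {1..n}"
  shows "fs.dim (block_sub n X p i lam) = (\<Prod>j\<in>{1..<i}. card (X j)) * fs.dim (eigspace (X i) (p i) lam)"
proof -
  let ?G = "PiE {1..n} (Gs B ev i lam)"
  have ind: "fs.independent (tens n X ` ?G)"
    by (rule fs.independent_mono[OF TB_indep]) (use G_sub in blast)
  have "fs.dim (block_sub n X p i lam) = card (tens n X ` ?G)"
    unfolding block_span[OF i] fs.dim_span by (rule fs.dim_eq_card_independent[OF ind])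
  also have "\<dots> = card ?G" by (rule card_image[OF inj_on_subset[OF inj_T G_sub]])
  also have "\<dots> = (\<Prod>j\<in>{1..n}. card (Gs B ev i lam j))" by (simp add: card_PiE)
  also have "\<dots> = (\<Prod>j\<in>{1..<i}. card (Gs B ev i lam j)) * card (Gs B ev i lam i) *
      (\<Prod>j\<in>{i<..n}. card (Gs B ev i lam j))" by (rule prod_split3[OF i])
  also have "(\<Prod>j\<in>{1..<i}. card (Gs B ev i lam j)) = (\<Prod>j\<in>{1..<i}. card (X j))"
    using i ebp(3) by (intro prod.cong refl) (auto simp: Gs_def)
  also have "card (Gs B ev i lam i) = fs.dim (eigspace (X i) (p i) lam)"
    using dim_eig_card[OF i] by (simp add: Gs_def)
  also have "(\<Prod>j\<in>{i<..n}. card (Gs B ev i lam j)) = 1"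
    using i card_ev1 by (intro prod.neutral) (auto simp: Gs_def)
  finally show ?thesis by (simp only: mult_1_right)
qed

end

lemma eig_subspace_gen: "fs.subspace {f. apply_kernel A q f = fscale mu f}"
  unfolding fs.subspace_def
  by (auto simp: K_add K_scale K_zero fs.scale_right_distrib fs.scale_scale mult.commute
      simp del: fscale_apply plus_fun_apply)

context PS begin

lemma xin: "x \<in> prodX n X \<Longrightarrow> j \<in> {1..n} \<Longrightarrow> x j \<in> X j"
  by (auto simp: PiE_iff)

lemma avg_const:
  assumes j: "j \<in> {1..n}" and b: "b \<in> B j" "ev j b = 1" and y: "y \<in> X j"
  shows "(\<Sum>z\<in>X j. b z) / real (card (X j)) = b y"
proof -
  have be: "b \<in> eigspace (X j) (p j) 1" using basis_eig[OF j b(1)] b(2) by simp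
  have st: "stochastic (X j) (p j)" "irreducible_kernel (X j) (p j)" using stoch irr j by auto
  have "(\<Sum>z\<in>X j. b z) = (\<Sum>z\<in>X j. b y)"
    by (intro sum.cong refl harmonic_const[OF finX[OF j] st be _ y])
  also have "\<dots> = real (card (X j)) * b y" by simp
  finally show ?thesis using finX[OF j] neX[OF j] by (simp add: card_gt_0_iff)
qed

lemma avg_zero:
  assumes j: "j \<in> {2..n}" and b: "b \<in> B j" "ev j b \<noteq> 1"
  shows "(\<Sum>z\<in>X j. b z) / real (card (X j)) = 0"
proof -
  have j1: "j \<in> {1..n}" using j by auto
  have be: "b \<in> eigspace (X j) (p j) (ev j b)" using basis_eig[OF j1 b(1)] .
  have st: "stochastic (X j) (p j)" using stoch j1 by auto
  have sy: "\<forall>x\<in>X j. \<forall>y\<in>X j. p j x y = p j y x" using sym j by auto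
  show ?thesis using sum_zero_eig[OF finX[OF j1] st sy be b(2)] by simp
qed

lemma block_eig_basis:
  assumes i: "i \<in> {1..n}" and c: "i = 1 \<or> lam \<noteq> 1" and b: "b \<in> PiE {1..n} (Gs B ev i lam)"
  shows "apply_kernel (prodX n X) (nested_kernel n X p0 p) (tens n X b)
     = fscale (p0 i * lam + (\<Sum>k\<in>{i<..n}. p0 k)) (tens n X b)"
proof
  fix x
  show "apply_kernel (prodX n X) (nested_kernel n X p0 p) (tens n X b) x
     = fscale (p0 i * lam + (\<Sum>k\<in>{i<..n}. p0 k)) (tens n X b) x"
  proof (cases "x \<in> prodX n X")
    case False then show ?thesis by (simp add: apply_kernel_def tens_def)
  next
    case True
    have bG: "b j \<in> Gs B ev i lam j" if "j \<in> {1..n}" for j using b that by (auto simp: PiE_iff)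
    have bB: "b j \<in> B j" if "j \<in> {1..n}" for j using Gs_sub[OF that] bG[OF that] by blast
    have evi: "ev i (b i) = lam" using bG[OF i] by (simp add: Gs_def)
    have evj: "ev j (b j) = 1" if "j \<in> {i<..n}" for j using bG[of j] that i by (auto simp: Gs_def)
    define T where "T = (\<Prod>j\<in>{1..n}. b j (x j))"
    define avg where "avg j = (\<Sum>z\<in>X j. b j z) / real (card (X j))" for j
    have Kb: "apply_kernel (X k) (p k) (b k) (x k) = ev k (b k) * b k (x k)" if "k \<in> {1..n}" for k
      using ebp(6)[OF that] bB[OF that] by simp
    have avgc: "(\<Prod>j\<in>{k<..n}. avg j) = (\<Prod>j\<in>{k<..n}. b j (x j))" if "i \<le> k" for k
    proof (intro prod.cong refl)
      fix j assume j: "j \<in> {k<..n}"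
      then have j1: "j \<in> {1..n}" "j \<in> {i<..n}" using that i by auto
      show "avg j = b j (x j)" unfolding avg_def
        by (rule avg_const[OF j1(1) bB[OF j1(1)] evj[OF j1(2)] xin[OF True j1(1)]])
    qed
    have tm: "p0 k * (\<Prod>j\<in>{1..<k}. b j (x j)) * apply_kernel (X k) (p k) (b k) (x k) * (\<Prod>j\<in>{k<..n}. avg j)
        = (if k < i then 0 else if k = i then p0 i * lam * T else p0 k * T)" if k: "k \<in> {1..n}" for k
    proof (cases "k < i")
      case True
      then have i2: "i \<in> {2..n}" and l: "lam \<noteq> 1" using k i c by auto
      have "avg i = 0" unfolding avg_def by (rule avg_zero[OF i2 bB[OF i]]) (simp add: evi l)
      then have "(\<Prod>j\<in>{k<..n}. avg j) = 0" using True i by (intro prod_zero) auto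
      then show ?thesis using True by simp
    next
      case False
      then have "(\<Prod>j\<in>{k<..n}. avg j) = (\<Prod>j\<in>{k<..n}. b j (x j))" by (intro avgc) simp
      moreover have "ev k (b k) = (if k = i then lam else 1)" using False k evi evj by auto
      ultimately show ?thesis using False
        unfolding Kb[OF k] T_def prod_split3[OF k, of "\<lambda>j. b j (x j)"] by (auto simp: mult_ac)
    qed
    have "apply_kernel (prodX n X) (nested_kernel n X p0 p) (tens n X b) x
        = (\<Sum>k\<in>{1..n}. p0 k * (\<Prod>j\<in>{1..<k}. b j (x j)) * apply_kernel (X k) (p k) (b k) (x k) * (\<Prod>j\<in>{k<..n}. avg j))"
      unfolding avg_def by (rule P_tensor[OF fin True])
    also have "\<dots> = (\<Sum>k\<in>{1..n}. (if k < i then 0 else if k = i then p0 i * lam * T else p0 k * T))"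
      by (intro sum.cong refl tm) 
    also have "\<dots> = (p0 i * lam + (\<Sum>k\<in>{i<..n}. p0 k)) * T"
      unfolding sum_split3[OF i] by (simp add: sum_distrib_right sum_distrib_left algebra_simps)
    also have "\<dots> = fscale (p0 i * lam + (\<Sum>k\<in>{i<..n}. p0 k)) (tens n X b) x"
      using True by (simp add: tens_def T_def)
    finally show ?thesis .
  qed
qed

lemma block_eig:
  assumes i: "i \<in> {1..n}" and c: "i = 1 \<or> lam \<noteq> 1" and f: "f \<in> block_sub n X p i lam"
  shows "apply_kernel (prodX n X) (nested_kernel n X p0 p) f = fscale (p0 i * lam + (\<Sum>k\<in>{i<..n}. p0 k)) f"
proof -
  have "block_sub n X p i lam \<subseteq> {f. apply_kernel (prodX n X) (nested_kernel n X p0 p) f = fscale (p0 i * lam + (\<Sum>k\<in>{i<..n}. p0 k)) f}"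
    unfolding block_span[OF i]
    by (rule fs.span_minimal[OF _ eig_subspace_gen]) (use block_eig_basis[OF i c] in blast)
  then show ?thesis using f by blast
qed

end

lemma ipw_sum_right: "ipw A w c (\<Sum>b\<in>S. F b) = (\<Sum>b\<in>S. ipw A w c (F b))"
  using ipw_sum_left[of A w F S c] by (simp add: ipw_sym)

definition Iset :: "nat \<Rightarrow> (nat \<Rightarrow> 'a set) \<Rightarrow> (nat \<Rightarrow> 'a \<Rightarrow> 'a \<Rightarrow> real) \<Rightarrow> (nat \<times> real) set" where
  "Iset n X p = {(i, lam). i \<in> {1..n} \<and> lam \<in> eigvals (X i) (p i) \<and> (i = 1 \<or> lam \<noteq> 1)}"

context PS begin

abbreviation "Gset k \<equiv> PiE {1..n} (Gs B ev (fst k) (snd k))"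

lemma eigvals_eq: "i \<in> {1..n} \<Longrightarrow> eigvals (X i) (p i) = ev i ` B i"
  using eb_eigvals[OF finX wposX saX ebX] by blast

lemma finite_I: "finite (Iset n X p)"
proof (rule finite_subset)
  show "Iset n X p \<subseteq> Sigma {1..n} (\<lambda>i. eigvals (X i) (p i))" by (auto simp: Iset_def)
  show "finite (Sigma {1..n} (\<lambda>i. eigvals (X i) (p i)))"
    using eigvals_eq finB by (intro finite_SigmaI) auto
qed

lemma I_fst: "k \<in> Iset n X p \<Longrightarrow> fst k \<in> {1..n}"
  by (auto simp: Iset_def)

lemma top_exists:
  assumes b: "b \<in> PiE {1..n} B"
  shows "\<exists>k\<in>Iset n X p. b \<in> Gset k"
proof -
  have bB: "b j \<in> B j" if "j \<in> {1..n}" for j using b that by (auto simp: PiE_iff)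
  define J where "J = {j\<in>{1..n}. ev j (b j) \<noteq> 1}"
  define i where "i = (if J = {} then 1 else Max J)"
  have finJ: "finite J" by (simp add: J_def)
  have i: "i \<in> {1..n}" using n2 Max_in[OF finJ] by (auto simp: i_def J_def)
  have above: "ev j (b j) = 1" if "j \<in> {i<..n}" for j
  proof (rule ccontr)
    assume "ev j (b j) \<noteq> 1"
    then have "j \<in> J" using that by (auto simp: J_def)
    then have "j \<le> Max J" using finJ by simp
    moreover have "J \<noteq> {}" using \<open>j \<in> J\<close> by auto
    ultimately show False using that by (auto simp: i_def)
  qed
  have c: "i = 1 \<or> ev i (b i) \<noteq> 1"
  proof (cases "J = {}")
    case False then have "Max J \<in> J" using finJ by simp
    then show ?thesis using False by (auto simp: i_def J_def)
  qed (simp add: i_def)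
  have k: "(i, ev i (b i)) \<in> Iset n X p"
    using i c bB[OF i] eigvals_eq[OF i] by (auto simp: Iset_def)
  have "b \<in> Gset (i, ev i (b i))"
    using b bB above by (auto simp: PiE_iff Gs_def not_less)
  then show ?thesis using k by blast
qed

lemma uniq_G:
  assumes k: "k \<in> Iset n X p" and k': "k' \<in> Iset n X p" and b: "b \<in> Gset k" "b \<in> Gset k'"
  shows "k = k'"
proof -
  obtain i lam where ki: "k = (i, lam)" by (cases k)
  obtain i' lam' where ki': "k' = (i', lam')" by (cases k')
  have i: "i \<in> {1..n}" "i = 1 \<or> lam \<noteq> 1" using k ki by (auto simp: Iset_def)
  have i': "i' \<in> {1..n}" "i' = 1 \<or> lam' \<noteq> 1" using k' ki' by (auto simp: Iset_def)
  have g1: "b j \<in> Gs B ev i lam j" if "j \<in> {1..n}" for j using b(1) that ki by (auto simp: PiE_iff)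
  have g2: "b j \<in> Gs B ev i' lam' j" if "j \<in> {1..n}" for j using b(2) that ki' by (auto simp: PiE_iff)
  have "i = i'"
  proof (rule ccontr)
    assume ne: "i \<noteq> i'"
    show False
    proof (cases "i < i'")
      case True
      then have "ev i' (b i') = 1" using g1[OF i'(1)] by (auto simp: Gs_def)
      moreover have "ev i' (b i') = lam'" using g2[OF i'(1)] by (auto simp: Gs_def)
      moreover have "lam' \<noteq> 1" using i'(2) True i(1) by auto
      ultimately show False by simp
    next
      case False
      then have "i' < i" using ne by simp
      then have "ev i (b i) = 1" using g2[OF i(1)] by (auto simp: Gs_def)
      moreover have "ev i (b i) = lam" using g1[OF i(1)] by (auto simp: Gs_def)
      moreover have "lam \<noteq> 1" using i(2) \<open>i' < i\<close> i'(1) by auto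
      ultimately show False by simp
    qed
  qed
  moreover have "lam = lam'"
    using g1[OF i(1)] g2[OF i(1)] \<open>i = i'\<close> by (auto simp: Gs_def)
  ultimately show ?thesis using ki ki' by simp
qed

lemma block_L: "i \<in> {1..n} \<Longrightarrow> block_sub n X p i lam \<subseteq> Lfun (prodX n X)"
  unfolding block_span by (rule fs.span_minimal[OF _ Lfun_subspace]) (use tens_Lfun in blast)

lemma orth_blocks:
  assumes k: "k \<in> Iset n X p" and k': "k' \<in> Iset n X p" and ne: "k \<noteq> k'"
    and u: "u \<in> block_sub n X p (fst k) (snd k)" and v: "v \<in> block_sub n X p (fst k') (snd k')"
  shows "ipw (prodX n X) (Wt n \<pi>) u v = 0"
proof -
  let ?ip = "ipw (prodX n X) (Wt n \<pi>)"
  have us: "u \<in> fs.span (tens n X ` Gset k)" using u block_span[OF I_fst[OF k]] by simp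
  have vs: "v \<in> fs.span (tens n X ` Gset k')" using v block_span[OF I_fst[OF k']] by simp
  have base: "?ip a c = 0" if a: "a \<in> tens n X ` Gset k" and c: "c \<in> tens n X ` Gset k'" for a c
  proof -
    obtain b where b: "b \<in> Gset k" "a = tens n X b" using a by auto
    obtain b' where b': "b' \<in> Gset k'" "c = tens n X b'" using c by auto
    have "b \<noteq> b'" using uniq_G[OF k k' b(1)] b'(1) ne by auto
    then show ?thesis using orth_T[of b b'] b b' G_sub by blast
  qed
  have "?ip u c = 0" if c: "c \<in> tens n X ` Gset k'" for c
    by (rule ipw_span_orth[OF _ us]) (use base c in blast)
  then have "?ip v u = 0" by (intro ipw_span_orth[OF _ vs]) (simp add: ipw_sym)
  then show ?thesis by (simp add: ipw_sym)
qed

lemma direct_sum: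
  "is_direct_sum (Lfun (prodX n X)) (Iset n X p) (\<lambda>(i, lam). block_sub n X p i lam)"
proof -
  let ?I = "Iset n X p"
  let ?V = "\<lambda>(i, lam). block_sub n X p i lam"
  let ?TB = "tens n X ` PiE {1..n} B"
  let ?ip = "ipw (prodX n X) (Wt n \<pi>)"
  have V: "?V k = block_sub n X p (fst k) (snd k)" for k by (cases k) simp
  have finTB: "finite ?TB" using finB by (intro finite_imageI finite_PiE) auto
  have Vsp: "?V k = fs.span (tens n X ` Gset k)" if "k \<in> ?I" for k
    unfolding V using block_span[OF I_fst[OF that]] .
  have unionTB: "(\<Union>k\<in>?I. tens n X ` Gset k) = ?TB"
  proof
    show "(\<Union>k\<in>?I. tens n X ` Gset k) \<subseteq> ?TB" using G_sub by blast
    show "?TB \<subseteq> (\<Union>k\<in>?I. tens n X ` Gset k)" using top_exists by blast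
  qed
  have disj: "tens n X ` Gset k \<inter> tens n X ` Gset k' = {}" if "k \<in> ?I" "k' \<in> ?I" "k \<noteq> k'" for k k'
  proof (rule ccontr)
    assume "tens n X ` Gset k \<inter> tens n X ` Gset k' \<noteq> {}"
    then obtain b b' where b: "b \<in> Gset k" "b' \<in> Gset k'" "tens n X b = tens n X b'" by auto
    then have "b = b'" using inj_T G_sub by (meson inj_onD subsetD)
    then show False using uniq_G[OF that(1,2) b(1)] b(2) that(3) by simp
  qed
  have ex: "\<exists>g. (\<forall>k\<in>?I. g k \<in> ?V k) \<and> (\<forall>k. k \<notin> ?I \<longrightarrow> g k = (\<lambda>_. 0)) \<and> f = (\<lambda>x. \<Sum>k\<in>?I. g k x)"
    if f: "f \<in> Lfun (prodX n X)" for f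
  proof -
    have "f \<in> fs.span ?TB" using TB_span f by blast
    then obtain u where fu: "f = (\<Sum>v\<in>?TB. fscale (u v) v)"
      unfolding fs.span_finite[OF finTB] by blast
    define g where "g k = (if k \<in> ?I then (\<Sum>v\<in>tens n X ` Gset k. fscale (u v) v) else (\<lambda>_. 0))" for k
    have "\<forall>k\<in>?I. g k \<in> ?V k"
    proof
      fix k assume k: "k \<in> ?I"
      show "g k \<in> ?V k" unfolding Vsp[OF k] g_def using k
        by (simp del: fscale_apply) (intro fs.span_sum fs.span_scale fs.span_base)
    qed
    moreover have "\<forall>k. k \<notin> ?I \<longrightarrow> g k = (\<lambda>_. 0)" by (simp add: g_def)
    moreover have "f = (\<lambda>x. \<Sum>k\<in>?I. g k x)"
    proof -
      have "(\<Sum>v\<in>?TB. fscale (u v) v) = (\<Sum>k\<in>?I. \<Sum>v\<in>tens n X ` Gset k. fscale (u v) v)"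
        unfolding unionTB[symmetric]
      proof (rule sum.UNION_disjoint)
        show "finite ?I" by (rule finite_I)
        show "\<forall>k\<in>?I. finite (tens n X ` Gset k)"
          using G_sub finTB by (meson finite_imageI finite_subset image_mono)
        show "\<forall>k\<in>?I. \<forall>k'\<in>?I. k \<noteq> k' \<longrightarrow> tens n X ` Gset k \<inter> tens n X ` Gset k' = {}"
          using disj by blast
      qed
      also have "\<dots> = (\<Sum>k\<in>?I. g k)" by (intro sum.cong refl) (simp add: g_def)
      finally show ?thesis unfolding fu by (simp add: sum_fun_apply fun_eq_iff)
    qed
    ultimately show ?thesis by blast
  qed
  have un: "g1 = g2"
    if g1: "(\<forall>k\<in>?I. g1 k \<in> ?V k) \<and> (\<forall>k. k \<notin> ?I \<longrightarrow> g1 k = (\<lambda>_. 0)) \<and> f = (\<lambda>x. \<Sum>k\<in>?I. g1 k x)"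
      and g2: "(\<forall>k\<in>?I. g2 k \<in> ?V k) \<and> (\<forall>k. k \<notin> ?I \<longrightarrow> g2 k = (\<lambda>_. 0)) \<and> f = (\<lambda>x. \<Sum>k\<in>?I. g2 k x)"
    for f g1 g2
  proof
    fix k0
    show "g1 k0 = g2 k0"
    proof (cases "k0 \<in> ?I")
      case False
      have "g1 k0 = (\<lambda>_. 0)" "g2 k0 = (\<lambda>_. 0)" using g1 g2 False by blast+
      then show ?thesis by simp
    next
      case True
      define h where "h k = g1 k - g2 k" for k
      have hV: "h k \<in> ?V k" if "k \<in> ?I" for k
        unfolding h_def Vsp[OF that] using g1 g2 that Vsp[OF that]
        by (intro fs.subspace_diff[OF fs.subspace_span]) auto
      have hs: "(\<Sum>k\<in>?I. h k) = 0"
      proof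
        fix x
        have e1: "f = (\<lambda>x. \<Sum>k\<in>?I. g1 k x)" using g1 by blast
        have e2: "f = (\<lambda>x. \<Sum>k\<in>?I. g2 k x)" using g2 by blast
        have "(\<lambda>x. \<Sum>k\<in>?I. g1 k x) = (\<lambda>x. \<Sum>k\<in>?I. g2 k x)" by (rule trans[OF e1[symmetric] e2])
        then have "(\<Sum>k\<in>?I. g1 k x) = (\<Sum>k\<in>?I. g2 k x)" by (rule fun_cong)
        then show "(\<Sum>k\<in>?I. h k) x = 0 x" by (simp add: h_def sum_fun_apply sum_subtractf)
      qed
      have "?ip (h k0) (\<Sum>k\<in>?I. h k) = (\<Sum>k\<in>?I. ?ip (h k0) (h k))" by (rule ipw_sum_right)
      also have "\<dots> = ?ip (h k0) (h k0)"
      proof -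
        have z: "\<forall>k\<in>?I - {k0}. ?ip (h k0) (h k) = 0"
        proof
          fix k assume k: "k \<in> ?I - {k0}"
          have kI: "k \<in> ?I" and ne: "k0 \<noteq> k" using k by auto
          have u: "h k0 \<in> block_sub n X p (fst k0) (snd k0)" using hV[OF True] V[of k0] by simp
          have v: "h k \<in> block_sub n X p (fst k) (snd k)" using hV[OF kI] V[of k] by simp
          show "?ip (h k0) (h k) = 0" by (rule orth_blocks[OF True kI ne u v])
        qed
        show ?thesis
          using sum.remove[OF finite_I True, of "\<lambda>k. ?ip (h k0) (h k)"] sum.neutral[OF z] by simp
      qed
      finally have "?ip (h k0) (h k0) = 0" unfolding hs by (simp add: ipw_def)
      moreover have "h k0 \<in> Lfun (prodX n X)" using hV[OF True] block_L[OF I_fst[OF True]] V by auto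
      ultimately have "h k0 = 0" using ipw_eq0[OF finP Wpos] by blast
      then show ?thesis by (simp add: h_def)
    qed
  qed
  show ?thesis unfolding is_direct_sum_def
  proof (intro conjI ballI)
    show "finite ?I" by (rule finite_I)
    show "?V k \<subseteq> Lfun (prodX n X)" if "k \<in> ?I" for k using block_L[OF I_fst[OF that]] V by simp
    fix f assume "f \<in> Lfun (prodX n X)"
    then show "\<exists>!g. (\<forall>k\<in>?I. g k \<in> ?V k) \<and> (\<forall>k. k \<notin> ?I \<longrightarrow> g k = (\<lambda>_. 0)) \<and> f = (\<lambda>x. \<Sum>k\<in>?I. g k x)"
    proof (rule ex_ex1I[OF ex])
      fix g1 g2
      assume "(\<forall>k\<in>?I. g1 k \<in> ?V k) \<and> (\<forall>k. k \<notin> ?I \<longrightarrow> g1 k = (\<lambda>_. 0)) \<and> f = (\<lambda>x. \<Sum>k\<in>?I. g1 k x)"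
        "(\<forall>k\<in>?I. g2 k \<in> ?V k) \<and> (\<forall>k. k \<notin> ?I \<longrightarrow> g2 k = (\<lambda>_. 0)) \<and> f = (\<lambda>x. \<Sum>k\<in>?I. g2 k x)"
      then show "g1 = g2" by (rule un)
    qed
  qed
qed

end

theorem proposition6p1:
  fixes n :: nat and X :: "nat \<Rightarrow> 'a set" and p :: "nat \<Rightarrow> 'a \<Rightarrow> 'a \<Rightarrow> real"
    and \<pi> :: "nat \<Rightarrow> 'a \<Rightarrow> real" and p0 :: "nat \<Rightarrow> real"
  assumes n2: "n \<ge> 2"
    and fin: "\<forall>i\<in>{1..n}. finite (X i)"
    and stoch: "\<forall>i\<in>{1..n}. stochastic (X i) (p i)"
    and irr: "\<forall>i\<in>{1..n}. irreducible_kernel (X i) (p i)"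
    and pos: "\<forall>i\<in>{1..n}. positive_prob (X i) (\<pi> i)"
    and db: "\<forall>i\<in>{1..n}. detailed_balance (X i) (\<pi> i) (p i)"
    and sym: "\<forall>i\<in>{2..n}. \<forall>x\<in>X i. \<forall>y\<in>X i. p i x y = p i y x"
    and p0pos: "\<forall>i\<in>{1..n}. p0 i > 0"
    and p0sum: "(\<Sum>i\<in>{1..n}. p0 i) = 1"
  defines "P \<equiv> apply_kernel (prodX n X) (nested_kernel n X p0 p)"
  shows
    "(\<forall>lam\<in>eigvals (X n) (p n) - {1}.
        (\<forall>f\<in>block_sub n X p n lam. P f = fscale (p0 n * lam) f) \<and>
        vector_space.dim fscale (block_sub n X p n lam)
          = (\<Prod>j\<in>{1..<n}. card (X j)) * vector_space.dim fscale (eigspace (X n) (p n) lam))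
   \<and> (\<forall>j\<in>{1..n-2}. \<forall>lam\<in>eigvals (X (j+1)) (p (j+1)) - {1}.
        (\<forall>f\<in>block_sub n X p (j+1) lam.
            P f = fscale (p0 (j+1) * lam + (\<Sum>i\<in>{j+2..n}. p0 i)) f) \<and>
        vector_space.dim fscale (block_sub n X p (j+1) lam)
          = (\<Prod>i\<in>{1..j}. card (X i)) * vector_space.dim fscale (eigspace (X (j+1)) (p (j+1)) lam))
   \<and> (\<forall>lam\<in>eigvals (X 1) (p 1).
        (\<forall>f\<in>block_sub n X p 1 lam. P f = fscale (p0 1 * lam + (\<Sum>i\<in>{2..n}. p0 i)) f) \<and>
        vector_space.dim fscale (block_sub n X p 1 lam)
          = vector_space.dim fscale (eigspace (X 1) (p 1) lam))
   \<and> is_direct_sum (Lfun (prodX n X))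
       ({(n, lam) | lam. lam \<in> eigvals (X n) (p n) - {1}}
        \<union> {(j+1, lam) | j lam. j \<in> {1..n-2} \<and> lam \<in> eigvals (X (j+1)) (p (j+1)) - {1}}
        \<union> {(1, lam) | lam. lam \<in> eigvals (X 1) (p 1)})
       (\<lambda>(i, lam). block_sub n X p i lam)"
proof -
  have ex: "\<forall>i\<in>{1..n}. \<exists>Bev. ebasis (X i) (wt \<pi> i) (p i) (fst Bev) (snd Bev)"
  proof
    fix i assume i: "i \<in> {1..n}"
    have fi: "finite (X i)" using fin i by blast
    obtain B ev where "ebasis (X i) (wt \<pi> i) (p i) B ev"
      using ebasis_exists[OF fi wt_pos[OF pos i] wt_sa[OF db sym i]] by blast
    then show "\<exists>Bev. ebasis (X i) (wt \<pi> i) (p i) (fst Bev) (snd Bev)" by (intro exI[of _ "(B, ev)"]) simp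
  qed
  then obtain BE where BE: "\<forall>i\<in>{1..n}. ebasis (X i) (wt \<pi> i) (p i) (fst (BE i)) (snd (BE i))"
    using bchoice[OF ex] by blast
  define B where "B i = fst (BE i)" for i
  define ev where "ev i = snd (BE i)" for i
  have BE': "\<forall>i\<in>{1..n}. ebasis (X i) (wt \<pi> i) (p i) (B i) (ev i)" using BE by (simp add: B_def ev_def)
  interpret PS n X p \<pi> p0 B ev
    by (rule PS.intro[OF n2 fin stoch irr pos db sym BE'])
  have nI: "n \<in> {1..n}" using n2 by simp
  have oneI: "(1::nat) \<in> {1..n}" using n2 by simp
  have part1: "\<forall>lam\<in>eigvals (X n) (p n) - {1}.
        (\<forall>f\<in>block_sub n X p n lam. P f = fscale (p0 n * lam) f) \<and>
        vector_space.dim fscale (block_sub n X p n lam)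
          = (\<Prod>j\<in>{1..<n}. card (X j)) * vector_space.dim fscale (eigspace (X n) (p n) lam)"
  proof
    fix lam assume lam: "lam \<in> eigvals (X n) (p n) - {1}"
    have c: "n = 1 \<or> lam \<noteq> 1" using lam by simp
    show "(\<forall>f\<in>block_sub n X p n lam. P f = fscale (p0 n * lam) f) \<and>
        vector_space.dim fscale (block_sub n X p n lam)
          = (\<Prod>j\<in>{1..<n}. card (X j)) * vector_space.dim fscale (eigspace (X n) (p n) lam)"
      using block_eig[OF nI c] block_dim[OF nI, of lam] unfolding P_def by simp
  qed
  have part2: "\<forall>j\<in>{1..n-2}. \<forall>lam\<in>eigvals (X (j+1)) (p (j+1)) - {1}.
        (\<forall>f\<in>block_sub n X p (j+1) lam.
            P f = fscale (p0 (j+1) * lam + (\<Sum>i\<in>{j+2..n}. p0 i)) f) \<and>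
        vector_space.dim fscale (block_sub n X p (j+1) lam)
          = (\<Prod>i\<in>{1..j}. card (X i)) * vector_space.dim fscale (eigspace (X (j+1)) (p (j+1)) lam)"
  proof (intro ballI)
    fix j lam assume j: "j \<in> {1..n-2}" and lam: "lam \<in> eigvals (X (j+1)) (p (j+1)) - {1}"
    have jI: "j + 1 \<in> {1..n}" using j by auto
    have c: "j + 1 = 1 \<or> lam \<noteq> 1" using lam by simp
    have s1: "{j+2..n} = {j+1<..n}" by auto
    have s2: "{1..<j+1} = {1..j}" by auto
    show "(\<forall>f\<in>block_sub n X p (j+1) lam.
            P f = fscale (p0 (j+1) * lam + (\<Sum>i\<in>{j+2..n}. p0 i)) f) \<and>
        vector_space.dim fscale (block_sub n X p (j+1) lam)
          = (\<Prod>i\<in>{1..j}. card (X i)) * vector_space.dim fscale (eigspace (X (j+1)) (p (j+1)) lam)"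
      using block_eig[OF jI c] block_dim[OF jI, of lam] unfolding P_def s1 s2[symmetric] by simp
  qed
  have part3: "\<forall>lam\<in>eigvals (X 1) (p 1).
        (\<forall>f\<in>block_sub n X p 1 lam. P f = fscale (p0 1 * lam + (\<Sum>i\<in>{2..n}. p0 i)) f) \<and>
        vector_space.dim fscale (block_sub n X p 1 lam)
          = vector_space.dim fscale (eigspace (X 1) (p 1) lam)"
  proof
    fix lam assume lam: "lam \<in> eigvals (X 1) (p 1)"
    have c: "(1::nat) = 1 \<or> lam \<noteq> 1" by simp
    have s1: "{2..n} = {1<..n}" by auto
    show "(\<forall>f\<in>block_sub n X p 1 lam. P f = fscale (p0 1 * lam + (\<Sum>i\<in>{2..n}. p0 i)) f) \<and>
        vector_space.dim fscale (block_sub n X p 1 lam)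
          = vector_space.dim fscale (eigspace (X 1) (p 1) lam)"
      using block_eig[OF oneI c] block_dim[OF oneI, of lam] unfolding P_def s1 by simp
  qed
  have I_eq: "{(n, lam) | lam. lam \<in> eigvals (X n) (p n) - {1}}
        \<union> {(j+1, lam) | j lam. j \<in> {1..n-2} \<and> lam \<in> eigvals (X (j+1)) (p (j+1)) - {1}}
        \<union> {(1, lam) | lam. lam \<in> eigvals (X 1) (p 1)} = Iset n X p"
  proof
    show "{(n, lam) | lam. lam \<in> eigvals (X n) (p n) - {1}}
        \<union> {(j+1, lam) | j lam. j \<in> {1..n-2} \<and> lam \<in> eigvals (X (j+1)) (p (j+1)) - {1}}
        \<union> {(1, lam) | lam. lam \<in> eigvals (X 1) (p 1)} \<subseteq> Iset n X p"
      using n2 by (auto simp: Iset_def)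
    show "Iset n X p \<subseteq> {(n, lam) | lam. lam \<in> eigvals (X n) (p n) - {1}}
        \<union> {(j+1, lam) | j lam. j \<in> {1..n-2} \<and> lam \<in> eigvals (X (j+1)) (p (j+1)) - {1}}
        \<union> {(1, lam) | lam. lam \<in> eigvals (X 1) (p 1)}"
    proof
      fix k assume k: "k \<in> Iset n X p"
      obtain i lam where ki: "k = (i, lam)" by (cases k)
      have i: "i \<in> {1..n}" "lam \<in> eigvals (X i) (p i)" "i = 1 \<or> lam \<noteq> 1"
        using k ki by (auto simp: Iset_def)
      show "k \<in> {(n, lam) | lam. lam \<in> eigvals (X n) (p n) - {1}}
        \<union> {(j+1, lam) | j lam. j \<in> {1..n-2} \<and> lam \<in> eigvals (X (j+1)) (p (j+1)) - {1}}
        \<union> {(1, lam) | lam. lam \<in> eigvals (X 1) (p 1)}"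
      proof (cases "i = 1")
        case True then show ?thesis using ki i by auto
      next
        case False
        then have l: "lam \<noteq> 1" using i by auto
        show ?thesis
        proof (cases "i = n")
          case True then show ?thesis using ki i l by auto
        next
          case False
          have j: "i - 1 \<in> {1..n-2}" using i(1) False \<open>i \<noteq> 1\<close> by auto
          have e: "i - 1 + 1 = i" using i(1) by auto
          have "(i, lam) \<in> {(j+1, lam) | j lam. j \<in> {1..n-2} \<and> lam \<in> eigvals (X (j+1)) (p (j+1)) - {1}}"
            unfolding mem_Collect_eq
            by (rule exI[of _ "i - 1"], rule exI[of _ lam]) (use j e i l in simp)
          then show ?thesis using ki by blast
        qed
      qed
    qed
  qed
  show ?thesis unfolding I_eq using part1 part2 part3 direct_sum by blast
qed

end
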